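(* $\mathrm{QSym}_B$, with the power series product, unit $1=M_\emptyset$, coproduct $\Delta_B(M_{(\alpha_1,\dots,\alpha_k)})=\sum_{i=0}^kM_{(\alpha_1,\dots,\alpha_i)}\otimes M_{(\alpha_{i+1},\dots,\alpha_k)}$ and counit $\epsilon_B(M_\alpha)=\delta_{\alpha,\emptyset}$, is a Hopf algebra whose antipode $S_B$ is given by $$S_B(M_\alpha)=(-1)^{\ell(\alpha)}\sum_{J\models\ell(\alpha)}M_{J\circ\alpha^r}$$ for every $B$-composition $\alpha$.
   Context: $\mathbf{k}$ is a commutative ring containing $\mathbb{Q}$. $B$ is a commutative monoid written additively with identity $0$, additively finite (each $a\in B$ is $b+c$ for only finitely many $(b,c)\in B^2$) and such that $B\setminus\{0\}$ is closed under addition. $X=\{x_1<x_2<\cdots\}$; $\mathbf k[[X]]_B$ is the algebra of possibly infinite $\mathbf k$-linear combinations of formal monomials $\prod x^{f(x)}$, $f:X\to B$ finitely supported, multiplied by adding exponents. A $B$-composition is a finite (possibly empty, $\emptyset$) sequence $\alpha=(\alpha_1,\dots,\alpha_k)$ of elements of $B\setminus\{0\}$, $\ell(\alpha)=k$, $\alpha^r=(\alpha_k,\dots,\alpha_1)$. $M_\alpha=\sum_{1\le i_1<\cdots<i_k}x_{i_1}^{\alpha_1}\cdots x_{i_k}^{\alpha_k}$, $M_\emptyset=1$; these are linearly independent and their $\mathbf k$-span $\mathrm{QSym}_B$ is a subalgebra of $\mathbf k[[X]]_B$. For a sequence $J=(j_1,\dots,j_l)$ of positive integers with sum $k$ (written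 $J\models k$; for $k=0$ only the empty $J$), $J\circ\alpha=(\alpha_1+\cdots+\alpha_{j_1},\alpha_{j_1+1}+\cdots+\alpha_{j_1+j_2},\dots,\alpha_{j_1+\cdots+j_{l-1}+1}+\cdots+\alpha_k)$; the sum over $J$ counts each $J$ separately. *)

theory Defs
  imports "HOL-Library.Poly_Mapping"
begin

typedef (overloaded) ('b::zero) bcomp = "{xs::'b list. 0 \<notin> set xs}"
  by (rule exI[of _ "[]"]) simp

text \<open>Monomials: finitely supported exponent functions X -> B, with X = {x_0 < x_1 < ...}
  indexed by nat. A formal power series in k[[X]]_B is its coefficient function.\<close>

definition Mser :: "'b::comm_monoid_add bcomp \<Rightarrow> (nat \<Rightarrow>\<^sub>0 'b) \<Rightarrow> 'k::comm_semiring_1" where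
  "Mser a f = of_nat (card {is. length is = length (Rep_bcomp a) \<and> sorted_wrt (<) is \<and>
      f = (\<Sum>j<length is. Poly_Mapping.single (is ! j) (Rep_bcomp a ! j))})"

definition pmult :: "((nat \<Rightarrow>\<^sub>0 'b::comm_monoid_add) \<Rightarrow> 'k::comm_semiring_1)
    \<Rightarrow> ((nat \<Rightarrow>\<^sub>0 'b) \<Rightarrow> 'k) \<Rightarrow> ((nat \<Rightarrow>\<^sub>0 'b) \<Rightarrow> 'k)" where
  "pmult F G = (\<lambda>h. \<Sum>p\<in>{(f, g). f + g = h}. F (fst p) * G (snd p))"

definition pone :: "(nat \<Rightarrow>\<^sub>0 'b::comm_monoid_add) \<Rightarrow> 'k::comm_semiring_1" where
  "pone = (\<lambda>h. if h = 0 then 1 else 0)"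

text \<open>Elements of QSym_B are represented by their (finitely supported) coordinates in the
  M-basis; ser maps coordinates to the power series sum c_alpha M_alpha.\<close>
definition ser :: "('b::comm_monoid_add bcomp \<Rightarrow>\<^sub>0 'k::comm_semiring_1) \<Rightarrow> (nat \<Rightarrow>\<^sub>0 'b) \<Rightarrow> 'k" where
  "ser c = (\<lambda>f. \<Sum>a\<in>Poly_Mapping.keys c. Poly_Mapping.lookup c a * Mser a f)"

definition qsmult :: "'k::comm_semiring_1 \<Rightarrow> ('a \<Rightarrow>\<^sub>0 'k) \<Rightarrow> ('a \<Rightarrow>\<^sub>0 'k)" where
  "qsmult r c = (\<Sum>a\<in>Poly_Mapping.keys c. Poly_Mapping.single a (r * Poly_Mapping.lookup c a))"

definition qmult :: "('b::comm_monoid_add bcomp \<Rightarrow>\<^sub>0 'k::comm_semiring_1)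
    \<Rightarrow> ('b bcomp \<Rightarrow>\<^sub>0 'k) \<Rightarrow> ('b bcomp \<Rightarrow>\<^sub>0 'k)" where
  "qmult a b = (THE c. ser c = pmult (ser a) (ser b))"

definition qunit :: "'b::zero bcomp \<Rightarrow>\<^sub>0 'k::comm_semiring_1" where
  "qunit = Poly_Mapping.single (Abs_bcomp []) 1"

definition bc_take :: "nat \<Rightarrow> 'b::zero bcomp \<Rightarrow> 'b bcomp" where
  "bc_take i a = Abs_bcomp (take i (Rep_bcomp a))"

definition bc_drop :: "nat \<Rightarrow> 'b::zero bcomp \<Rightarrow> 'b bcomp" where
  "bc_drop i a = Abs_bcomp (drop i (Rep_bcomp a))"

text \<open>Coproduct Delta_B, extended linearly; QSym_B (x) QSym_B has basis M_alpha (x) M_beta.\<close>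
definition qcomul :: "('b::zero bcomp \<Rightarrow>\<^sub>0 'k::comm_semiring_1) \<Rightarrow> ('b bcomp \<times> 'b bcomp \<Rightarrow>\<^sub>0 'k)" where
  "qcomul c = (\<Sum>a\<in>Poly_Mapping.keys c. \<Sum>i\<in>{0..length (Rep_bcomp a)}.
      Poly_Mapping.single (bc_take i a, bc_drop i a) (Poly_Mapping.lookup c a))"

definition qcounit :: "('b::zero bcomp \<Rightarrow>\<^sub>0 'k::comm_semiring_1) \<Rightarrow> 'k" where
  "qcounit c = Poly_Mapping.lookup c (Abs_bcomp [])"

fun jcomp :: "nat list \<Rightarrow> 'b::monoid_add list \<Rightarrow> 'b list" where
  "jcomp [] xs = []"
| "jcomp (j # J) xs = sum_list (take j xs) # jcomp J (drop j xs)"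

definition nat_compositions :: "nat \<Rightarrow> nat list set" where
  "nat_compositions k = {J. sum_list J = k \<and> (\<forall>j\<in>set J. 0 < j)}"

definition qantipode :: "('b::comm_monoid_add bcomp \<Rightarrow>\<^sub>0 'k::comm_ring_1) \<Rightarrow> ('b bcomp \<Rightarrow>\<^sub>0 'k)" where
  "qantipode c = (\<Sum>a\<in>Poly_Mapping.keys c. \<Sum>J\<in>nat_compositions (length (Rep_bcomp a)).
      Poly_Mapping.single (Abs_bcomp (jcomp J (rev (Rep_bcomp a))))
        ((- 1) ^ length (Rep_bcomp a) * Poly_Mapping.lookup c a))"

definition tunit :: "('b::zero bcomp \<times> 'b bcomp \<Rightarrow>\<^sub>0 'k::comm_semiring_1)" where
  "tunit = Poly_Mapping.single (Abs_bcomp [], Abs_bcomp []) 1"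

text \<open>Product on QSym (x) QSym: (a (x) b)(c (x) d) = ac (x) bd, bilinearly.\<close>
definition tmult :: "('b::comm_monoid_add bcomp \<times> 'b bcomp \<Rightarrow>\<^sub>0 'k::comm_semiring_1)
    \<Rightarrow> ('b bcomp \<times> 'b bcomp \<Rightarrow>\<^sub>0 'k) \<Rightarrow> ('b bcomp \<times> 'b bcomp \<Rightarrow>\<^sub>0 'k)" where
  "tmult x y = (\<Sum>p\<in>Poly_Mapping.keys x. \<Sum>q\<in>Poly_Mapping.keys y.
      let u = qmult (Poly_Mapping.single (fst p) 1) (Poly_Mapping.single (fst q) 1);
          v = qmult (Poly_Mapping.single (snd p) 1) (Poly_Mapping.single (snd q) 1)
      in \<Sum>g\<in>Poly_Mapping.keys u. \<Sum>d\<in>Poly_Mapping.keys v.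
           Poly_Mapping.single (g, d) (Poly_Mapping.lookup x p * Poly_Mapping.lookup y q * Poly_Mapping.lookup u g * Poly_Mapping.lookup v d))"

definition comul_left :: "('b::zero bcomp \<times> 'b bcomp \<Rightarrow>\<^sub>0 'k::comm_semiring_1)
    \<Rightarrow> ('b bcomp \<times> 'b bcomp \<times> 'b bcomp \<Rightarrow>\<^sub>0 'k)" where
  "comul_left x = (\<Sum>p\<in>Poly_Mapping.keys x. let u = qcomul (Poly_Mapping.single (fst p) (1::'k)) in
      \<Sum>q\<in>Poly_Mapping.keys u. Poly_Mapping.single (fst q, snd q, snd p) (Poly_Mapping.lookup x p * Poly_Mapping.lookup u q))"

definition comul_right :: "('b::zero bcomp \<times> 'b bcomp \<Rightarrow>\<^sub>0 'k::comm_semiring_1)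
    \<Rightarrow> ('b bcomp \<times> 'b bcomp \<times> 'b bcomp \<Rightarrow>\<^sub>0 'k)" where
  "comul_right x = (\<Sum>p\<in>Poly_Mapping.keys x. let u = qcomul (Poly_Mapping.single (snd p) (1::'k)) in
      \<Sum>q\<in>Poly_Mapping.keys u. Poly_Mapping.single (fst p, fst q, snd q) (Poly_Mapping.lookup x p * Poly_Mapping.lookup u q))"

text \<open>(epsilon (x) id) and (id (x) epsilon) : QSym^(x2) -> QSym (k (x) QSym = QSym).\<close>
definition counit_left :: "('b::zero bcomp \<times> 'b bcomp \<Rightarrow>\<^sub>0 'k::comm_semiring_1) \<Rightarrow> ('b bcomp \<Rightarrow>\<^sub>0 'k)" where
  "counit_left x = (\<Sum>p\<in>Poly_Mapping.keys x.
      Poly_Mapping.single (snd p) (qcounit (Poly_Mapping.single (fst p) (1::'k)) * Poly_Mapping.lookup x p))"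

definition counit_right :: "('b::zero bcomp \<times> 'b bcomp \<Rightarrow>\<^sub>0 'k::comm_semiring_1) \<Rightarrow> ('b bcomp \<Rightarrow>\<^sub>0 'k)" where
  "counit_right x = (\<Sum>p\<in>Poly_Mapping.keys x.
      Poly_Mapping.single (fst p) (Poly_Mapping.lookup x p * qcounit (Poly_Mapping.single (snd p) (1::'k))))"

definition conv_left :: "(('b::comm_monoid_add bcomp \<Rightarrow>\<^sub>0 'k::comm_semiring_1) \<Rightarrow> ('b bcomp \<Rightarrow>\<^sub>0 'k))
    \<Rightarrow> ('b bcomp \<times> 'b bcomp \<Rightarrow>\<^sub>0 'k) \<Rightarrow> ('b bcomp \<Rightarrow>\<^sub>0 'k)" where
  "conv_left S x = (\<Sum>p\<in>Poly_Mapping.keys x. qsmult (Poly_Mapping.lookup x p)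
      (qmult (S (Poly_Mapping.single (fst p) 1)) (Poly_Mapping.single (snd p) 1)))"

definition conv_right :: "(('b::comm_monoid_add bcomp \<Rightarrow>\<^sub>0 'k::comm_semiring_1) \<Rightarrow> ('b bcomp \<Rightarrow>\<^sub>0 'k))
    \<Rightarrow> ('b bcomp \<times> 'b bcomp \<Rightarrow>\<^sub>0 'k) \<Rightarrow> ('b bcomp \<Rightarrow>\<^sub>0 'k)" where
  "conv_right S x = (\<Sum>p\<in>Poly_Mapping.keys x. qsmult (Poly_Mapping.lookup x p)
      (qmult (Poly_Mapping.single (fst p) 1) (S (Poly_Mapping.single (snd p) 1))))"

end

theory Submission
  imports Defs "HOL-Library.FuncSet"
begin

abbreviation lookup :: "('a \<Rightarrow>\<^sub>0 'b::zero) \<Rightarrow> 'a \<Rightarrow> 'b" where "lookup \<equiv> Poly_Mapping.lookup"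
abbreviation keys :: "('a \<Rightarrow>\<^sub>0 'b::zero) \<Rightarrow> 'a set" where "keys \<equiv> Poly_Mapping.keys"

fun Sm :: "nat list \<Rightarrow> 'b::monoid_add list \<Rightarrow> (nat \<Rightarrow>\<^sub>0 'b)" where
  "Sm (i # ix) (x # xs) = Poly_Mapping.single i x + Sm ix xs"
| "Sm _ _ = 0"

lemma Sm_Nil2 [simp]: "Sm ix [] = 0"
  by (cases ix) auto

lemma Sm_sum:
  "length ix = length xs \<Longrightarrow>
    Sm ix xs = (\<Sum>j<length ix. Poly_Mapping.single (ix ! j) (xs ! j))"
proof (induction ix arbitrary: xs)
  case Nil then show ?case by simp
next
  case (Cons i ix)
  then obtain x xs' where xs: "xs = x # xs'" by (cases xs) auto
  with Cons show ?case
    by (simp add: sum.lessThan_Suc_shift del: sum.lessThan_Suc)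
qed

lemma Sm_append:
  "Sm (xs @ ys) zs = Sm xs (take (length xs) zs) + Sm ys (drop (length xs) zs)"
proof (induction xs arbitrary: zs)
  case Nil then show ?case by simp
next
  case (Cons x xs)
  then show ?case by (cases zs) (auto simp: add.assoc)
qed

lemma Sm_append2:
  "length xs = length us \<Longrightarrow> Sm (xs @ ys) (us @ vs) = Sm xs us + Sm ys vs"
  by (simp add: Sm_append)

lemma keys_Sm_subset: "keys (Sm ix xs) \<subseteq> set ix"
proof (induction ix arbitrary: xs)
  case Nil then show ?case by simp
next
  case (Cons i ix)
  then show ?case
    by (cases xs) (auto dest!: subsetD[OF keys_add] split: if_splits)
qed

lemma lookup_Sm_notin: "q \<notin> set ix \<Longrightarrow> lookup (Sm ix xs) q = 0"
  using keys_Sm_subset[of ix xs] by (auto simp: in_keys_iff)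

lemma lookup_Sm_nth:
  "distinct ps \<Longrightarrow> length vs = length ps \<Longrightarrow> j < length ps \<Longrightarrow> lookup (Sm ps vs) (ps ! j) = vs ! j"
proof (induction ps arbitrary: vs j)
  case Nil then show ?case by simp
next
  case (Cons p ps)
  then obtain v vs' where vs: "vs = v # vs'" by (cases vs) auto
  show ?case
  proof (cases j)
    case 0
    with Cons vs show ?thesis by (simp add: lookup_add lookup_Sm_notin)
  next
    case (Suc j')
    with Cons vs have "ps ! j' \<noteq> p" using nth_mem by fastforce
    with Cons vs Suc show ?thesis by (simp add: lookup_add lookup_single)
  qed
qed

lemma lookup_Sm_map:
  "distinct ps \<Longrightarrow> lookup (Sm ps (map g ps)) q = (if q \<in> set ps then g q else 0)"
proof (induction ps)
  case Nil then show ?case by simp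
next
  case (Cons p ps)
  then show ?case by (auto simp: lookup_add lookup_single lookup_Sm_notin when_def)
qed

lemma Sm_reconstruct:
  "distinct ps \<Longrightarrow> keys h \<subseteq> set ps \<Longrightarrow> Sm ps (map (lookup h) ps) = h"
  by (rule poly_mapping_eqI) (auto simp: lookup_Sm_map in_keys_iff)

lemma Sm_single_sum:
  "Sm (replicate j p) L = Poly_Mapping.single p (sum_list (take j L))"
proof (induction j arbitrary: L)
  case 0 then show ?case by simp
next
  case (Suc j)
  then show ?case by (cases L) (auto simp: single_add)
qed

definition comp :: "(nat \<Rightarrow>\<^sub>0 'b::zero) \<Rightarrow> 'b list" where
  "comp h = map (lookup h) (sorted_list_of_set (keys h))"

lemma strict_sorted_list_of_set: "sorted_wrt (<) (xs::nat list) \<Longrightarrow> sorted_list_of_set (set xs) = xs"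
  using sorted_list_of_set_unique[of "set xs" xs]
  by (simp add: distinct_card strict_sorted_iff)

lemma comp_cons:
  assumes "\<forall>q\<in>keys R. p < q"
  shows "comp (Poly_Mapping.single p v + R) = (if v = 0 then [] else [v]) @ comp R"
proof (cases "v = 0")
  case True then show ?thesis by simp
next
  case False
  have pR: "lookup R p = 0" using assms by (auto simp: in_keys_iff)
  have K: "keys (Poly_Mapping.single p v + R) = insert p (keys R)"
    using False pR by (auto simp: in_keys_iff lookup_add lookup_single when_def split: if_splits)
  have "sorted_list_of_set (insert p (keys R)) = p # sorted_list_of_set (keys R)"
  proof -
    have "Min (insert p (keys R)) = p" using assms
      by (simp add: Min_insert2 less_imp_le)
    moreover have "insert p (keys R) - {p} = keys R" using assms by auto
    ultimately show ?thesis
      using sorted_list_of_set_nonempty[of "insert p (keys R)"] by simp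
  qed
  moreover have "map (lookup (Poly_Mapping.single p v + R)) (sorted_list_of_set (keys R))
      = map (lookup R) (sorted_list_of_set (keys R))"
    using assms by (auto simp: lookup_add lookup_single)
  ultimately show ?thesis using False pR
    by (simp add: comp_def K lookup_add)
qed

lemma comp_Sm:
  "sorted_wrt (<) ps \<Longrightarrow> length vs = length ps \<Longrightarrow> comp (Sm ps vs) = filter (\<lambda>x. x \<noteq> 0) vs"
proof (induction ps arbitrary: vs)
  case Nil then show ?case by (simp add: comp_def)
next
  case (Cons p ps)
  then obtain v vs' where vs: "vs = v # vs'" by (cases vs) auto
  have "\<forall>q\<in>keys (Sm ps vs'). p < q" using Cons keys_Sm_subset[of ps vs'] by auto
  with Cons vs show ?case by (simp add: comp_cons)
qed

lemma comp_values: "x \<in> set (comp h) \<Longrightarrow> x \<noteq> 0"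
  by (auto simp: comp_def in_keys_iff)

lemma length_comp: "length (comp h) = card (keys h)"
  by (simp add: comp_def)

lemma comp_eq_Nil: "comp h = [] \<longleftrightarrow> h = 0"
  by (simp add: comp_def)

lemma Sm_comp: "Sm (sorted_list_of_set (keys h)) (comp h) = h"
  unfolding comp_def by (rule Sm_reconstruct) auto


lemma Rep_bcomp_nz: "0 \<notin> set (Rep_bcomp a)"
  using Rep_bcomp[of a] by simp

lemma Abs_bcomp_inv: "0 \<notin> set xs \<Longrightarrow> Rep_bcomp (Abs_bcomp xs) = xs"
  by (simp add: Abs_bcomp_inverse)

definition cmp :: "(nat \<Rightarrow>\<^sub>0 'b::zero) \<Rightarrow> 'b bcomp" where
  "cmp h = Abs_bcomp (comp h)"

lemma Rep_cmp: "Rep_bcomp (cmp h) = comp h"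
  unfolding cmp_def by (rule Abs_bcomp_inv) (auto dest: comp_values)

definition mono :: "'b::monoid_add bcomp \<Rightarrow> (nat \<Rightarrow>\<^sub>0 'b)" where
  "mono a = Sm [0..<length (Rep_bcomp a)] (Rep_bcomp a)"

lemma filter_nz_id: "0 \<notin> set xs \<Longrightarrow> filter (\<lambda>x. x \<noteq> 0) xs = xs"
  by (induction xs) auto

lemma comp_mono: "comp (mono a) = Rep_bcomp a"
  unfolding mono_def by (subst comp_Sm) (auto simp: filter_nz_id Rep_bcomp_nz)

lemma cmp_mono [simp]: "cmp (mono a) = a"
  by (simp add: Rep_bcomp_inject[symmetric] Rep_cmp comp_mono)

lemma cmp_eq_iff: "cmp f = cmp g \<longleftrightarrow> comp f = comp g"
  by (simp add: Rep_bcomp_inject[symmetric] Rep_cmp)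

lemma cmp_zero: "cmp 0 = Abs_bcomp []"
  by (simp add: cmp_def comp_def)

lemma cmp_eq_nil: "cmp h = Abs_bcomp [] \<longleftrightarrow> h = 0"
  by (simp add: Rep_bcomp_inject[symmetric] Rep_cmp Abs_bcomp_inv comp_eq_Nil)

definition Dec :: "(nat \<Rightarrow>\<^sub>0 'b::comm_monoid_add) \<Rightarrow> ((nat \<Rightarrow>\<^sub>0 'b) \<times> (nat \<Rightarrow>\<^sub>0 'b)) set" where
  "Dec h = {(f, g). f + g = h}"

lemma pmult_Dec: "pmult F G h = (\<Sum>p\<in>Dec h. F (fst p) * G (snd p))"
  by (simp add: pmult_def Dec_def)

definition pk :: "nat list \<Rightarrow> (nat \<Rightarrow>\<^sub>0 'b::monoid_add) \<Rightarrow> (nat \<Rightarrow>\<^sub>0 'b)" where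
  "pk ps f = Sm [0..<length ps] (map (lookup f) ps)"

definition up :: "nat list \<Rightarrow> (nat \<Rightarrow>\<^sub>0 'b::monoid_add) \<Rightarrow> (nat \<Rightarrow>\<^sub>0 'b)" where
  "up ps g = Sm ps (map (lookup g) [0..<length ps])"

lemma lookup_pk: "lookup (pk ps f) j = (if j < length ps then lookup f (ps ! j) else 0)"
proof (cases "j < length ps")
  case True
  then have "lookup (pk ps f) ([0..<length ps] ! j) = map (lookup f) ps ! j"
    unfolding pk_def by (intro lookup_Sm_nth) auto
  with True show ?thesis by simp
next
  case False
  then show ?thesis unfolding pk_def by (simp add: lookup_Sm_notin)
qed

lemma lookup_up_nth: "distinct ps \<Longrightarrow> j < length ps \<Longrightarrow> lookup (up ps g) (ps ! j) = lookup g j"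
  unfolding up_def by (subst lookup_Sm_nth) auto

lemma lookup_up_notin: "q \<notin> set ps \<Longrightarrow> lookup (up ps g) q = 0"
  unfolding up_def by (simp add: lookup_Sm_notin)

lemma pk_add: "pk ps (f + g) = pk ps f + pk ps g"
  by (rule poly_mapping_eqI) (simp add: lookup_pk lookup_add)

lemma up_add: "distinct ps \<Longrightarrow> up ps (f + g) = up ps f + up ps g"
proof (rule poly_mapping_eqI)
  fix q assume d: "distinct ps"
  show "lookup (up ps (f + g)) q = lookup (up ps f + up ps g) q"
  proof (cases "q \<in> set ps")
    case True
    then obtain j where "j < length ps" "q = ps ! j" by (auto simp: in_set_conv_nth)
    then show ?thesis using d by (simp add: lookup_up_nth lookup_add)
  next
    case False
    then show ?thesis by (simp add: lookup_up_notin lookup_add)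
  qed
qed

lemma up_pk: "distinct ps \<Longrightarrow> keys f \<subseteq> set ps \<Longrightarrow> up ps (pk ps f) = f"
proof (rule poly_mapping_eqI)
  fix q assume d: "distinct ps" and k: "keys f \<subseteq> set ps"
  show "lookup (up ps (pk ps f)) q = lookup f q"
  proof (cases "q \<in> set ps")
    case True
    then obtain j where "j < length ps" "q = ps ! j" by (auto simp: in_set_conv_nth)
    then show ?thesis using d by (simp add: lookup_up_nth lookup_pk)
  next
    case False
    then show ?thesis using k by (auto simp: lookup_up_notin in_keys_iff)
  qed
qed

lemma pk_up: "distinct ps \<Longrightarrow> keys g \<subseteq> {..<length ps} \<Longrightarrow> pk ps (up ps g) = g"
  by (rule poly_mapping_eqI) (auto simp: lookup_pk lookup_up_nth in_keys_iff)

lemma keys_pk: "keys (pk ps f) \<subseteq> {..<length ps}"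
  using keys_Sm_subset unfolding pk_def by fastforce

lemma keys_up: "keys (up ps g) \<subseteq> set ps"
  using keys_Sm_subset unfolding up_def by fastforce

lemma comp_Sm_recon: "sorted_wrt (<) ps \<Longrightarrow> keys (f::nat \<Rightarrow>\<^sub>0 'b::monoid_add) \<subseteq> set ps \<Longrightarrow>
    comp f = filter (\<lambda>x. x \<noteq> 0) (map (lookup f) ps)"
  using comp_Sm[of ps "map (lookup f) ps"] Sm_reconstruct[of ps f]
  by (simp add: strict_sorted_iff)

lemma comp_pk: "sorted_wrt (<) ps \<Longrightarrow> keys f \<subseteq> set ps \<Longrightarrow> comp (pk ps f) = comp f"
  unfolding pk_def by (simp add: comp_Sm comp_Sm_recon)

lemma comp_up: "sorted_wrt (<) ps \<Longrightarrow> keys g \<subseteq> {..<length ps} \<Longrightarrow> comp (up ps g) = comp g"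
  unfolding up_def
  by (subst comp_Sm) (auto simp: comp_Sm_recon[of "[0..<length ps]"] atLeast0LessThan)

lemma pk_mono: "pk (sorted_list_of_set (keys h)) h = mono (cmp h)"
  by (simp add: pk_def mono_def Rep_cmp comp_def)

lemma cmp_pk: "sorted_wrt (<) ps \<Longrightarrow> keys f \<subseteq> set ps \<Longrightarrow> cmp (pk ps f) = cmp f"
  by (simp add: cmp_eq_iff comp_pk)

lemma cmp_up: "sorted_wrt (<) ps \<Longrightarrow> keys g \<subseteq> {..<length ps} \<Longrightarrow> cmp (up ps g) = cmp g"
  by (simp add: cmp_eq_iff comp_up)

definition qsmult_l :: "'k::comm_semiring_1 \<Rightarrow> ('a \<Rightarrow>\<^sub>0 'k) \<Rightarrow> ('a \<Rightarrow>\<^sub>0 'k)" where "qsmult_l = qsmult"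

lemma lookup_qsmult: "lookup (qsmult r c) x = r * lookup c x"
proof -
  have "lookup (qsmult r c) x = (\<Sum>a\<in>keys c. if a = x then r * lookup c a else 0)"
    unfolding qsmult_def lookup_sum by (rule sum.cong) (auto simp: lookup_single)
  also have "\<dots> = r * lookup c x" by (simp add: in_keys_iff)
  finally show ?thesis .
qed

definition cat :: "'b::zero bcomp \<Rightarrow> 'b bcomp \<Rightarrow> 'b bcomp" where
  "cat x y = Abs_bcomp (Rep_bcomp x @ Rep_bcomp y)"

lemma Rep_cat: "Rep_bcomp (cat x y) = Rep_bcomp x @ Rep_bcomp y"
  unfolding cat_def by (rule Abs_bcomp_inv) (simp add: Rep_bcomp_nz)

lemma Rep_bc_take: "Rep_bcomp (bc_take i a) = take i (Rep_bcomp a)"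
  unfolding bc_take_def by (rule Abs_bcomp_inv) (meson Rep_bcomp_nz in_set_takeD)

lemma Rep_bc_drop: "Rep_bcomp (bc_drop i a) = drop i (Rep_bcomp a)"
  unfolding bc_drop_def by (rule Abs_bcomp_inv) (meson Rep_bcomp_nz in_set_dropD)

lemma Rep_nil: "Rep_bcomp (Abs_bcomp [] :: 'b::zero bcomp) = []"
  by (rule Abs_bcomp_inv) simp

lemma cat_assoc: "cat (cat u v) w = cat u (cat v w)"
  by (simp add: Rep_bcomp_inject[symmetric] Rep_cat)

lemma cat_nil_left [simp]: "cat (Abs_bcomp []) w = w"
  by (simp add: Rep_bcomp_inject[symmetric] Rep_cat Rep_nil)

lemma cat_nil_right [simp]: "cat w (Abs_bcomp []) = w"
  by (simp add: Rep_bcomp_inject[symmetric] Rep_cat Rep_nil)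

lemma cat_eq_nil: "cat x y = Abs_bcomp [] \<longleftrightarrow> x = Abs_bcomp [] \<and> y = Abs_bcomp []"
  by (simp add: Rep_bcomp_inject[symmetric] Rep_cat Rep_nil)

lemma take_drop_eq_iff:
  assumes "i \<le> length (Rep_bcomp a)"
  shows "(bc_take i a = x \<and> bc_drop i a = y) \<longleftrightarrow> (i = length (Rep_bcomp x) \<and> a = cat x y)"
proof
  assume "bc_take i a = x \<and> bc_drop i a = y"
  then have "Rep_bcomp x = take i (Rep_bcomp a)" "Rep_bcomp y = drop i (Rep_bcomp a)"
    by (auto simp: Rep_bc_take Rep_bc_drop)
  then show "i = length (Rep_bcomp x) \<and> a = cat x y"
    using assms by (simp add: Rep_bcomp_inject[symmetric] Rep_cat)
next
  assume "i = length (Rep_bcomp x) \<and> a = cat x y"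
  then show "bc_take i a = x \<and> bc_drop i a = y"
    by (simp add: Rep_bcomp_inject[symmetric] Rep_cat Rep_bc_take Rep_bc_drop)
qed

lemma cat_eq_nil': "Abs_bcomp [] = cat x y \<longleftrightarrow> x = Abs_bcomp [] \<and> y = Abs_bcomp []"
  using cat_eq_nil[of x y] by auto

lemma sum_keys_delta: "(\<Sum>p\<in>keys x. if p = t then lookup x p * r else 0) = lookup x t * (r::'k::semiring_0)"
  by (simp add: in_keys_iff)

lemma sum_keys_delta': "(\<Sum>p\<in>keys x. if p = t then lookup x p else 0) = lookup x t"
  by (simp add: in_keys_iff)

lemma lookup_qcomul: "lookup (qcomul c) (x, y) = lookup (c::'b::zero bcomp \<Rightarrow>\<^sub>0 'k::comm_semiring_1) (cat x y)"
proof -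
  have inner: "(\<Sum>i\<in>{0..length (Rep_bcomp a)}. lookup (Poly_Mapping.single (bc_take i a, bc_drop i a) (lookup c a)) (x, y))
      = (if a = cat x y then lookup c a else 0)" for a
  proof -
    have "(\<Sum>i\<in>{0..length (Rep_bcomp a)}. lookup (Poly_Mapping.single (bc_take i a, bc_drop i a) (lookup c a)) (x, y))
      = (\<Sum>i\<in>{0..length (Rep_bcomp a)}. if i = length (Rep_bcomp x) then (if a = cat x y then lookup c a else 0) else 0)"
      by (rule sum.cong) (auto simp: lookup_single when_def take_drop_eq_iff)
    also have "\<dots> = (if a = cat x y then lookup c a else 0)"
      by (auto simp: Rep_cat)
    finally show ?thesis .
  qed
  have "lookup (qcomul c) (x, y) = (\<Sum>a\<in>keys c. if a = cat x y then lookup c a else 0)"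
    unfolding qcomul_def lookup_sum using inner by simp
  also have "\<dots> = lookup c (cat x y)" by (rule sum_keys_delta')
  finally show ?thesis .
qed

lemma lookup_qcomul_single: "lookup (qcomul (Poly_Mapping.single a (1::'k::comm_semiring_1))) (u, v) = (if a = cat u v then 1 else 0)"
  by (simp add: lookup_qcomul lookup_single when_def)

lemma qcounit_single: "qcounit (Poly_Mapping.single a (1::'k::comm_semiring_1)) = (if a = Abs_bcomp [] then 1 else 0)"
  by (simp add: qcounit_def lookup_single when_def)

lemma lookup_comul_left: "lookup (comul_left x) (u, v, w) = lookup (x::_ \<Rightarrow>\<^sub>0 'k::comm_semiring_1) (cat u v, w)"
proof -
  have "lookup (comul_left x) (u, v, w) = (\<Sum>p\<in>keys x. if p = (cat u v, w) then lookup x p else 0)"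
    unfolding comul_left_def Let_def lookup_sum
  proof (rule sum.cong[OF refl])
    fix p assume "p \<in> keys x"
    let ?U = "qcomul (Poly_Mapping.single (fst p) (1::'k))"
    have "(\<Sum>q\<in>keys ?U. lookup (Poly_Mapping.single (fst q, snd q, snd p) (lookup x p * lookup ?U q)) (u, v, w))
        = (\<Sum>q\<in>keys ?U. if q = (u, v) then lookup ?U q * (if snd p = w then lookup x p else 0) else 0)"
      by (rule sum.cong) (auto simp: lookup_single when_def mult.commute)
    also have "\<dots> = lookup ?U (u, v) * (if snd p = w then lookup x p else 0)"
      by (rule sum_keys_delta)
    also have "\<dots> = (if p = (cat u v, w) then lookup x p else 0)"
      by (cases p) (auto simp: lookup_qcomul_single)
    finally show "(\<Sum>q\<in>keys ?U. lookup (Poly_Mapping.single (fst q, snd q, snd p) (lookup x p * lookup ?U q)) (u, v, w))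
        = (if p = (cat u v, w) then lookup x p else 0)" .
  qed
  also have "\<dots> = lookup x (cat u v, w)" by (rule sum_keys_delta')
  finally show ?thesis .
qed

lemma lookup_comul_right: "lookup (comul_right x) (u, v, w) = lookup (x::_ \<Rightarrow>\<^sub>0 'k::comm_semiring_1) (u, cat v w)"
proof -
  have "lookup (comul_right x) (u, v, w) = (\<Sum>p\<in>keys x. if p = (u, cat v w) then lookup x p else 0)"
    unfolding comul_right_def Let_def lookup_sum
  proof (rule sum.cong[OF refl])
    fix p assume "p \<in> keys x"
    let ?U = "qcomul (Poly_Mapping.single (snd p) (1::'k))"
    have "(\<Sum>q\<in>keys ?U. lookup (Poly_Mapping.single (fst p, fst q, snd q) (lookup x p * lookup ?U q)) (u, v, w))
        = (\<Sum>q\<in>keys ?U. if q = (v, w) then lookup ?U q * (if fst p = u then lookup x p else 0) else 0)"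
      by (rule sum.cong) (auto simp: lookup_single when_def mult.commute)
    also have "\<dots> = lookup ?U (v, w) * (if fst p = u then lookup x p else 0)"
      by (rule sum_keys_delta)
    also have "\<dots> = (if p = (u, cat v w) then lookup x p else 0)"
      by (cases p) (auto simp: lookup_qcomul_single)
    finally show "(\<Sum>q\<in>keys ?U. lookup (Poly_Mapping.single (fst p, fst q, snd q) (lookup x p * lookup ?U q)) (u, v, w))
        = (if p = (u, cat v w) then lookup x p else 0)" .
  qed
  also have "\<dots> = lookup x (u, cat v w)" by (rule sum_keys_delta')
  finally show ?thesis .
qed

lemma lookup_counit_left: "lookup (counit_left x) w = lookup (x::_ \<Rightarrow>\<^sub>0 'k::comm_semiring_1) (Abs_bcomp [], w)"
proof -
  have "lookup (counit_left x) w = (\<Sum>p\<in>keys x. if p = (Abs_bcomp [], w) then lookup x p else 0)"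
    unfolding counit_left_def lookup_sum
    by (rule sum.cong[OF refl]) (auto simp: lookup_single when_def qcounit_single)
  also have "\<dots> = lookup x (Abs_bcomp [], w)" by (rule sum_keys_delta')
  finally show ?thesis .
qed

lemma lookup_counit_right: "lookup (counit_right x) w = lookup (x::_ \<Rightarrow>\<^sub>0 'k::comm_semiring_1) (w, Abs_bcomp [])"
proof -
  have "lookup (counit_right x) w = (\<Sum>p\<in>keys x. if p = (w, Abs_bcomp []) then lookup x p else 0)"
    unfolding counit_right_def lookup_sum
    by (rule sum.cong[OF refl]) (auto simp: lookup_single when_def qcounit_single)
  also have "\<dots> = lookup x (w, Abs_bcomp [])" by (rule sum_keys_delta')
  finally show ?thesis .
qed

lemma coassoc: "comul_left (qcomul c) = comul_right (qcomul (c::_ \<Rightarrow>\<^sub>0 'k::comm_semiring_1))"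
  by (rule poly_mapping_eqI) (auto simp: lookup_comul_left lookup_comul_right lookup_qcomul cat_assoc)

lemma counit_ax: "counit_left (qcomul c) = c \<and> counit_right (qcomul (c::_ \<Rightarrow>\<^sub>0 'k::comm_semiring_1)) = c"
  by (auto intro!: poly_mapping_eqI simp: lookup_counit_left lookup_counit_right lookup_qcomul)

lemma aux_gd: "(\<Sum>g\<in>keys u. \<Sum>d\<in>keys v. lookup (Poly_Mapping.single (g, d) (C * lookup u g * lookup v d)) (\<gamma>, \<delta>))
    = C * lookup u \<gamma> * lookup (v::_ \<Rightarrow>\<^sub>0 'k::comm_semiring_1) \<delta>"
proof -
  have "(\<Sum>g\<in>keys u. \<Sum>d\<in>keys v. lookup (Poly_Mapping.single (g, d) (C * lookup u g * lookup v d)) (\<gamma>, \<delta>))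
      = (\<Sum>g\<in>keys u. if g = \<gamma> then lookup u g * (C * lookup v \<delta>) else 0)"
  proof (rule sum.cong[OF refl])
    fix g
    have "(\<Sum>d\<in>keys v. lookup (Poly_Mapping.single (g, d) (C * lookup u g * lookup v d)) (\<gamma>, \<delta>))
        = (\<Sum>d\<in>keys v. if d = \<delta> then lookup v d * (if g = \<gamma> then C * lookup u g else 0) else 0)"
      by (rule sum.cong) (auto simp: lookup_single when_def ac_simps)
    also have "\<dots> = lookup v \<delta> * (if g = \<gamma> then C * lookup u g else 0)" by (rule sum_keys_delta)
    also have "\<dots> = (if g = \<gamma> then lookup u g * (C * lookup v \<delta>) else 0)" by (simp add: ac_simps)
    finally show "(\<Sum>d\<in>keys v. lookup (Poly_Mapping.single (g, d) (C * lookup u g * lookup v d)) (\<gamma>, \<delta>))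
        = (if g = \<gamma> then lookup u g * (C * lookup v \<delta>) else 0)" .
  qed
  also have "\<dots> = lookup u \<gamma> * (C * lookup v \<delta>)" by (rule sum_keys_delta)
  finally show ?thesis by (simp add: ac_simps)
qed

lemma lookup_tmult: "lookup (tmult x y) (\<gamma>, \<delta>) = (\<Sum>p\<in>keys x. \<Sum>q\<in>keys y. lookup x p * lookup y q *
    lookup (qmult (Poly_Mapping.single (fst p) 1) (Poly_Mapping.single (fst q) 1)) \<gamma> *
    lookup (qmult (Poly_Mapping.single (snd p) 1) (Poly_Mapping.single (snd q) (1::'k::comm_semiring_1))) \<delta>)"
  unfolding tmult_def Let_def lookup_sum by (simp add: aux_gd)

lemma sum4_swap: "(\<Sum>p\<in>P. \<Sum>q\<in>Q. \<Sum>r\<in>R. \<Sum>s\<in>S. F p q r s) = (\<Sum>r\<in>R. \<Sum>s\<in>S. \<Sum>p\<in>P. \<Sum>q\<in>Q. F p q r s)"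
proof -
  have "(\<Sum>p\<in>P. \<Sum>q\<in>Q. \<Sum>r\<in>R. \<Sum>s\<in>S. F p q r s) = (\<Sum>p\<in>P. \<Sum>r\<in>R. \<Sum>q\<in>Q. \<Sum>s\<in>S. F p q r s)"
    by (rule sum.cong[OF refl], rule sum.swap)
  also have "\<dots> = (\<Sum>r\<in>R. \<Sum>p\<in>P. \<Sum>q\<in>Q. \<Sum>s\<in>S. F p q r s)" by (rule sum.swap)
  also have "\<dots> = (\<Sum>r\<in>R. \<Sum>p\<in>P. \<Sum>s\<in>S. \<Sum>q\<in>Q. F p q r s)"
    by (rule sum.cong[OF refl], rule sum.cong[OF refl], rule sum.swap)
  also have "\<dots> = (\<Sum>r\<in>R. \<Sum>s\<in>S. \<Sum>p\<in>P. \<Sum>q\<in>Q. F p q r s)"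
    by (rule sum.cong[OF refl], rule sum.swap)
  finally show ?thesis .
qed

lemma aux1: "c * (\<Sum>r\<in>R. A r) * (\<Sum>s\<in>S. B s) = (\<Sum>r\<in>R. \<Sum>s\<in>S. c * A r * B s :: 'k::comm_semiring_1)"
proof -
  have "c * (\<Sum>r\<in>R. A r) * (\<Sum>s\<in>S. B s) = c * (\<Sum>r\<in>R. \<Sum>s\<in>S. A r * B s)"
    by (simp only: mult.assoc sum_product)
  also have "\<dots> = (\<Sum>r\<in>R. \<Sum>s\<in>S. c * A r * B s)" by (simp add: sum_distrib_left mult.assoc)
  finally show ?thesis .
qed

definition sh :: "nat \<Rightarrow> (nat \<Rightarrow>\<^sub>0 'b::zero) \<Rightarrow> (nat \<Rightarrow>\<^sub>0 'b)" where
  "sh N g = Abs_poly_mapping (\<lambda>q. if N \<le> q then lookup g (q - N) else 0)"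

definition lo :: "nat \<Rightarrow> (nat \<Rightarrow>\<^sub>0 'b::zero) \<Rightarrow> (nat \<Rightarrow>\<^sub>0 'b)" where
  "lo N u = Abs_poly_mapping (\<lambda>q. if q < N then lookup u q else 0)"

definition hi :: "nat \<Rightarrow> (nat \<Rightarrow>\<^sub>0 'b::zero) \<Rightarrow> (nat \<Rightarrow>\<^sub>0 'b)" where
  "hi N u = Abs_poly_mapping (\<lambda>q. lookup u (q + N))"

lemma lookup_sh: "lookup (sh N g) q = (if N \<le> q then lookup g (q - N) else 0)"
proof -
  have "{q. (if N \<le> q then lookup g (q - N) else 0) \<noteq> 0} \<subseteq> (\<lambda>q. q + N) ` keys g"
  proof
    fix x assume "x \<in> {q. (if N \<le> q then lookup g (q - N) else 0) \<noteq> 0}"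
    then have "N \<le> x" "lookup g (x - N) \<noteq> 0" by (auto split: if_splits)
    then show "x \<in> (\<lambda>q. q + N) ` keys g" by (intro image_eqI[of _ _ "x - N"]) (auto simp: in_keys_iff)
  qed
  then have "finite {q. (if N \<le> q then lookup g (q - N) else 0) \<noteq> 0}"
    by (rule finite_subset) auto
  then show ?thesis by (simp add: sh_def)
qed

lemma lookup_lo: "lookup (lo N u) q = (if q < N then lookup u q else 0)"
proof -
  have "{q. (if q < N then lookup u q else 0) \<noteq> 0} \<subseteq> keys u"
    by (auto simp: in_keys_iff split: if_splits)
  then have "finite {q. (if q < N then lookup u q else 0) \<noteq> 0}"
    by (rule finite_subset) auto
  then show ?thesis by (simp add: lo_def)
qed

lemma lookup_hi: "lookup (hi N u) q = lookup u (q + N)"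
proof -
  have "{q. lookup u (q + N) \<noteq> 0} \<subseteq> (\<lambda>q. q - N) ` keys u"
  proof
    fix x assume "x \<in> {q. lookup u (q + N) \<noteq> 0}"
    then show "x \<in> (\<lambda>q. q - N) ` keys u" by (intro image_eqI[of _ _ "x + N"]) (auto simp: in_keys_iff)
  qed
  then have "finite {q. lookup u (q + N) \<noteq> 0}"
    by (rule finite_subset) auto
  then show ?thesis by (simp add: hi_def)
qed

lemma sh_add: "sh N (a + b) = sh N a + sh N (b::nat \<Rightarrow>\<^sub>0 'b::monoid_add)"
  by (rule poly_mapping_eqI) (simp add: lookup_sh lookup_add)

lemma lo_add: "lo N (a + b) = lo N a + lo N (b::nat \<Rightarrow>\<^sub>0 'b::monoid_add)"
  by (rule poly_mapping_eqI) (simp add: lookup_lo lookup_add)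

lemma hi_add: "hi N (a + b) = hi N a + hi N (b::nat \<Rightarrow>\<^sub>0 'b::monoid_add)"
  by (rule poly_mapping_eqI) (simp add: lookup_hi lookup_add)

lemma lo_sh: "keys f \<subseteq> {..<N} \<Longrightarrow> lo N (f + sh N g) = (f::nat \<Rightarrow>\<^sub>0 'b::monoid_add)"
  by (rule poly_mapping_eqI) (auto simp: lookup_lo lookup_add lookup_sh in_keys_iff)

lemma hi_sh: "keys f \<subseteq> {..<N} \<Longrightarrow> hi N (f + sh N g) = (g::nat \<Rightarrow>\<^sub>0 'b::monoid_add)"
proof (rule poly_mapping_eqI)
  fix q assume "keys f \<subseteq> {..<N}"
  then have "lookup f (q + N) = 0" by (auto simp: in_keys_iff)
  then show "lookup (hi N (f + sh N g)) q = lookup g q" by (simp add: lookup_hi lookup_add lookup_sh)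
qed

lemma lo_hi: "lo N u + sh N (hi N u) = (u::nat \<Rightarrow>\<^sub>0 'b::monoid_add)"
  by (rule poly_mapping_eqI) (simp add: lookup_lo lookup_add lookup_sh lookup_hi)

lemma keys_lo: "keys (lo N u) \<subseteq> {..<N}"
  by (auto simp: in_keys_iff lookup_lo split: if_splits)

lemma keys_sh: "keys (sh N g) \<subseteq> (\<lambda>q. q + N) ` keys g"
proof
  fix x assume "x \<in> keys (sh N g)"
  then have "N \<le> x" "lookup g (x - N) \<noteq> 0" by (auto simp: in_keys_iff lookup_sh split: if_splits)
  then show "x \<in> (\<lambda>q. q + N) ` keys g" by (intro image_eqI[of _ _ "x - N"]) (auto simp: in_keys_iff)
qed

lemma comp_sh:
  assumes kf: "keys f \<subseteq> {..<N}"
  shows "comp (f + sh N g) = comp f @ comp (g::nat \<Rightarrow>\<^sub>0 'b::monoid_add)"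
proof -
  define ps where "ps = sorted_list_of_set (keys f)"
  define qs where "qs = sorted_list_of_set (keys g)"
  define L where "L = ps @ map (\<lambda>q. q + N) qs"
  have ps: "sorted_wrt (<) ps" "set ps = keys f" by (auto simp: ps_def)
  have qs: "sorted_wrt (<) qs" "set qs = keys g" by (auto simp: qs_def)
  have L: "sorted_wrt (<) L"
    using ps qs kf unfolding L_def by (auto simp: sorted_wrt_append sorted_wrt_map)
  have kL: "keys (f + sh N g) \<subseteq> set L"
    using keys_add[of f "sh N g"] keys_sh[of N g] ps qs by (auto simp: L_def)
  have "comp (f + sh N g) = filter (\<lambda>x. x \<noteq> 0) (map (lookup (f + sh N g)) L)"
    by (rule comp_Sm_recon[OF L kL])
  also have "map (lookup (f + sh N g)) L = map (lookup f) ps @ map (lookup g) qs"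
  proof -
    have "map (lookup (f + sh N g)) ps = map (lookup f) ps"
      using ps kf by (auto simp: lookup_add lookup_sh)
    moreover have "lookup f (q + N) = 0" for q using kf by (auto simp: in_keys_iff)
    then have "map (lookup (f + sh N g)) (map (\<lambda>q. q + N) qs) = map (lookup g) qs"
      by (auto simp: lookup_add lookup_sh)
    ultimately show ?thesis by (simp add: L_def)
  qed
  also have "filter (\<lambda>x. x \<noteq> 0) (map (lookup f) ps @ map (lookup g) qs) = comp f @ comp g"
    using comp_Sm_recon[OF ps(1), of f] comp_Sm_recon[OF qs(1), of g] ps(2) qs(2) by simp
  finally show ?thesis .
qed

lemma cmp_sh: "keys f \<subseteq> {..<N} \<Longrightarrow> cmp (f + sh N g) = cat (cmp f) (cmp (g::nat \<Rightarrow>\<^sub>0 'b::monoid_add))"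
  unfolding cat_def Rep_cmp by (simp add: cmp_def comp_sh)

lemma CL_core:
  fixes r :: "nat \<Rightarrow> bool" and n :: nat and g :: "nat \<Rightarrow> 'k::comm_ring_1"
  assumes n: "1 \<le> n" and g: "\<And>j. j < n \<Longrightarrow> g j + g (Suc j) = 0"
  shows "(\<Sum>i\<in>{0..n}. if (\<forall>a. Suc a < i \<longrightarrow> r a) \<and> (\<forall>a. i \<le> a \<and> Suc a < n \<longrightarrow> \<not> r a) then g i else 0) = 0"
proof -
  define V where "V = (\<lambda>i. (\<forall>a. Suc a < i \<longrightarrow> r a) \<and> (\<forall>a. i \<le> a \<and> Suc a < n \<longrightarrow> \<not> r a))"
  define S where "S = {i\<in>{0..n}. V i}"
  have far: False if "V j" "V j'" "j' \<le> n" "j + 2 \<le> j'" for j j'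
  proof -
    have "r j" using that(2,4) unfolding V_def by auto
    moreover have "\<not> r j" using that(1,3,4) unfolding V_def by auto
    ultimately show False by simp
  qed
  have sumS: "(\<Sum>i\<in>{0..n}. if V i then g i else 0) = sum g S"
    unfolding S_def by (rule sum.inter_filter[symmetric]) simp
  have "sum g S = 0"
  proof (cases "S = {}")
    case True then show ?thesis by simp
  next
    case False
    then obtain i where i: "i \<in> S" by auto
    then have Vi: "V i" and iN: "i \<le> n" by (auto simp: S_def)
    show ?thesis
    proof (cases "i < n \<and> (i = 0 \<or> r (i - 1))")
      case True
      have VS: "V (Suc i)"
        unfolding V_def
      proof (intro conjI allI impI)
        fix a assume a: "Suc a < Suc i"
        show "r a"
        proof (cases "Suc a < i")
          case True then show ?thesis using Vi by (auto simp: V_def)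
        next
          case False
          then have "a = i - 1" "i \<noteq> 0" using a by auto
          then show ?thesis using \<open>i < n \<and> (i = 0 \<or> r (i - 1))\<close> by auto
        qed
      next
        fix a assume "Suc i \<le> a \<and> Suc a < n"
        then show "\<not> r a" using Vi by (auto simp: V_def)
      qed
      have "S = {i, Suc i}"
      proof (intro equalityI subsetI)
        fix j assume j: "j \<in> S"
        then have Vj: "V j" and jn: "j \<le> n" by (auto simp: S_def)
        have "\<not> j + 2 \<le> i" using far[OF Vj Vi iN] by blast
        moreover have "\<not> i + 2 \<le> j" using far[OF Vi Vj jn] by blast
        moreover have "j \<noteq> i - 1 \<or> i = 0"
          using far[OF _ VS, of "i - 1"] Vj True by force
        ultimately show "j \<in> {i, Suc i}" by auto
      next
        fix j assume "j \<in> {i, Suc i}"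
        then show "j \<in> S" using i VS True by (auto simp: S_def)
      qed
      then show ?thesis using g[of i] True by simp
    next
      case False
      then have i0: "i \<noteq> 0" using iN n by (cases "i = 0") auto
      have VP: "V (i - 1)"
        unfolding V_def
      proof (intro conjI allI impI)
        fix a assume "Suc a < i - 1"
        then show "r a" using Vi by (auto simp: V_def)
      next
        fix a assume a: "i - 1 \<le> a \<and> Suc a < n"
        show "\<not> r a"
        proof (cases "a = i - 1")
          case True
          then show ?thesis using False a i0 by auto
        next
          case False
          then show ?thesis using Vi a by (auto simp: V_def)
        qed
      qed
      have "S = {i - 1, i}"
      proof (intro equalityI subsetI)
        fix j assume j: "j \<in> S"
        then have Vj: "V j" and jn: "j \<le> n" by (auto simp: S_def)
        have "\<not> j + 2 \<le> i" using far[OF Vj Vi iN] by blast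
        moreover have "\<not> i + 2 \<le> j" using far[OF Vi Vj jn] by blast
        moreover have "j \<noteq> Suc i"
          using far[OF VP Vj jn] i0 by force
        ultimately show "j \<in> {i - 1, i}" by auto
      next
        fix j assume "j \<in> {i - 1, i}"
        then show "j \<in> S" using i VP by (auto simp: S_def)
      qed
      moreover have "g (i - 1) + g (Suc (i - 1)) = 0" using g[of "i - 1"] i0 iN by auto
      ultimately show ?thesis using i0 by simp
    qed
  qed
  then show ?thesis using sumS by (simp add: V_def)
qed

lemma valid_iff:
  assumes R: "transp R" and Q: "transp Q" and i: "i \<le> length ks"
  shows "(sorted_wrt R (take i ks) \<and> sorted_wrt Q (drop i ks)) \<longleftrightarrow>
    ((\<forall>a. Suc a < i \<longrightarrow> R (ks ! a) (ks ! Suc a)) \<and> (\<forall>a. i \<le> a \<and> Suc a < length ks \<longrightarrow> Q (ks ! a) (ks ! Suc a)))"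
proof -
  have 1: "sorted_wrt R (take i ks) \<longleftrightarrow> (\<forall>a. Suc a < i \<longrightarrow> R (ks ! a) (ks ! Suc a))"
    using i by (simp add: sorted_wrt_iff_nth_Suc_transp[OF R] min_def)
  have 2: "sorted_wrt Q (drop i ks) \<longleftrightarrow> (\<forall>a. Suc a < length ks - i \<longrightarrow> Q (ks ! (i + a)) (ks ! Suc (i + a)))"
    using i by (simp add: sorted_wrt_iff_nth_Suc_transp[OF Q])
  have 3: "(\<forall>a. Suc a < length ks - i \<longrightarrow> Q (ks ! (i + a)) (ks ! Suc (i + a)))
      \<longleftrightarrow> (\<forall>a. i \<le> a \<and> Suc a < length ks \<longrightarrow> Q (ks ! a) (ks ! Suc a))"
  proof
    assume H: "\<forall>a. Suc a < length ks - i \<longrightarrow> Q (ks ! (i + a)) (ks ! Suc (i + a))"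
    show "\<forall>a. i \<le> a \<and> Suc a < length ks \<longrightarrow> Q (ks ! a) (ks ! Suc a)"
    proof (intro allI impI)
      fix a assume a: "i \<le> a \<and> Suc a < length ks"
      then have "Suc (a - i) < length ks - i" by auto
      with H have "Q (ks ! (i + (a - i))) (ks ! Suc (i + (a - i)))" by blast
      with a show "Q (ks ! a) (ks ! Suc a)" by simp
    qed
  next
    assume H: "\<forall>a. i \<le> a \<and> Suc a < length ks \<longrightarrow> Q (ks ! a) (ks ! Suc a)"
    show "\<forall>a. Suc a < length ks - i \<longrightarrow> Q (ks ! (i + a)) (ks ! Suc (i + a))"
      using H by auto
  qed
  show ?thesis using 1 2 3 by simp
qed

lemma CL:
  fixes g :: "nat \<Rightarrow> 'k::comm_ring_1"
  assumes R: "transp R" and Q: "transp Q" and compl: "\<And>x y. Q x y \<longleftrightarrow> \<not> R x y"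
    and ne: "ks \<noteq> []" and g: "\<And>j. j < length ks \<Longrightarrow> g j + g (Suc j) = 0"
  shows "(\<Sum>i\<in>{0..length ks}. if sorted_wrt R (take i ks) \<and> sorted_wrt Q (drop i ks) then g i else 0) = 0"
proof -
  have "(\<Sum>i\<in>{0..length ks}. if sorted_wrt R (take i ks) \<and> sorted_wrt Q (drop i ks) then g i else 0)
    = (\<Sum>i\<in>{0..length ks}. if (\<forall>a. Suc a < i \<longrightarrow> R (ks ! a) (ks ! Suc a))
        \<and> (\<forall>a. i \<le> a \<and> Suc a < length ks \<longrightarrow> \<not> R (ks ! a) (ks ! Suc a)) then g i else 0)"
    by (rule sum.cong[OF refl]) (simp add: valid_iff[OF R Q] compl)
  also have "\<dots> = 0"
    by (rule CL_core) (use ne g in \<open>auto simp: Suc_le_eq\<close>)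
  finally show ?thesis .
qed

fun ex :: "nat list \<Rightarrow> nat list \<Rightarrow> nat list" where
  "ex (j # J) (p # ps) = replicate j p @ ex J ps"
| "ex _ _ = []"

fun rl :: "nat list \<Rightarrow> nat list \<times> nat list" where
  "rl [] = ([], [])"
| "rl (k # ks) = (case rl ks of (J, ps) \<Rightarrow>
      if ps \<noteq> [] \<and> hd ps = k then (Suc (hd J) # tl J, ps) else (1 # J, k # ps))"

lemma rl_props:
  "sorted ks \<Longrightarrow> rl ks = (J, ps) \<Longrightarrow> length J = length ps \<and> (\<forall>j\<in>set J. 0 < j) \<and>
     sorted_wrt (<) ps \<and> set ps = set ks \<and> sum_list J = length ks \<and> ex J ps = ks"
proof (induction ks arbitrary: J ps)
  case Nil then show ?case by auto
next
  case (Cons k ks)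
  obtain J' ps' where r: "rl ks = (J', ps')" by (cases "rl ks")
  have sk: "sorted ks" and kle: "\<forall>x\<in>set ks. k \<le> x" using Cons.prems by auto
  have IH: "length J' = length ps' \<and> (\<forall>j\<in>set J'. 0 < j) \<and> sorted_wrt (<) ps' \<and> set ps' = set ks
      \<and> sum_list J' = length ks \<and> ex J' ps' = ks" using Cons.IH[OF sk r] .
  show ?case
  proof (cases "ps' \<noteq> [] \<and> hd ps' = k")
    case True
    then obtain ps'' where ps': "ps' = k # ps''" by (cases ps') auto
    then obtain j J'' where J': "J' = j # J''" using IH by (cases J') auto
    have e: "J = Suc j # J''" "ps = ps'" using Cons.prems(2) r True J' by auto
    have "k \<in> set ks" using IH ps' by auto
    then show ?thesis using IH e J' ps' by auto
  next
    case False
    have e: "J = 1 # J'" "ps = k # ps'" using Cons.prems(2) r False by auto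
    have kn: "k \<notin> set ps'"
    proof
      assume kin: "k \<in> set ps'"
      then obtain q qs where q: "ps' = q # qs" by (cases ps') auto
      have "q \<in> set ks" using IH q by auto
      then have "k \<le> q" using kle by auto
      moreover have "k = q \<or> q < k" using IH q kin by auto
      ultimately have "q = k" by auto
      with False q show False by simp
    qed
    have "\<forall>x\<in>set ps'. k < x" using kn kle IH by (auto simp: order_le_less)
    then show ?thesis using IH e by auto
  qed
qed

lemma rl_rep: "rl R = (J, ps) \<Longrightarrow> (ps = [] \<or> hd ps \<noteq> p) \<Longrightarrow>
    rl (replicate (Suc m) p @ R) = (Suc m # J, p # ps)"
  by (induction m) auto

lemma rl_ex: "length J = length ps \<Longrightarrow> (\<forall>j\<in>set J. 0 < j) \<Longrightarrow> sorted_wrt (<) ps \<Longrightarrow> rl (ex J ps) = (J, ps)"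
proof (induction J ps rule: list_induct2)
  case Nil then show ?case by simp
next
  case (Cons j J p ps)
  then obtain m where m: "j = Suc m" by (cases j) auto
  have r: "rl (ex J ps) = (J, ps)" using Cons by auto
  moreover have "ps = [] \<or> hd ps \<noteq> p" using Cons.prems by (cases ps) auto
  ultimately have "rl (replicate (Suc m) p @ ex J ps) = (Suc m # J, p # ps)" by (rule rl_rep)
  then show ?case using m by (simp only: ex.simps)
qed

lemma set_ex: "set (ex J ps) \<subseteq> set ps"
  by (induction J ps rule: ex.induct) auto

lemma sorted_ex: "sorted ps \<Longrightarrow> sorted (ex J ps)"
proof (induction J ps rule: ex.induct)
  case (1 j J p ps)
  then show ?case using set_ex[of J ps] by (auto simp: sorted_append)
qed auto

lemma length_ex: "length J = length ps \<Longrightarrow> length (ex J ps) = sum_list J"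
  by (induction J ps rule: list_induct2) auto

lemma Sm_ex: "Sm (ex J ps) D = Sm ps (jcomp J (D::'b::monoid_add list))"
  by (induction J ps arbitrary: D rule: ex.induct) (auto simp: Sm_append Sm_single_sum)

lemma length_jcomp: "length (jcomp J D) = length J"
  by (induction J arbitrary: D) auto

lemma Sm_rev: "length ix = length xs \<Longrightarrow> Sm (rev ix) (rev xs) = Sm ix (xs::'b::comm_monoid_add list)"
proof (induction ix xs rule: list_induct2)
  case Nil then show ?case by simp
next
  case (Cons i ix x xs)
  then show ?case by (simp add: Sm_append2 add.commute)
qed

lemma length_le_sum_list: "\<forall>j\<in>set J. 0 < j \<Longrightarrow> length J \<le> sum_list (J::nat list)"
  by (induction J) auto

lemma finite_NC: "finite (nat_compositions n)"
proof -
  have "nat_compositions n \<subseteq> {J. set J \<subseteq> {..n} \<and> length J \<le> n}"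
    unfolding nat_compositions_def using length_le_sum_list member_le_sum_list by fastforce
  moreover have "finite {J. set J \<subseteq> {..n} \<and> length J \<le> n}"
    by (rule finite_lists_length_le) simp
  ultimately show ?thesis by (rule finite_subset)
qed

definition GS :: "(nat list \<Rightarrow> bool) \<Rightarrow> 'b::monoid_add list \<Rightarrow> (nat \<Rightarrow>\<^sub>0 'b) \<Rightarrow> nat list set" where
  "GS P xs h = {ix. length ix = length xs \<and> P ix \<and> Sm ix xs = h}"

lemma Mser_GS: "Mser a h = of_nat (card (GS (sorted_wrt (<)) (Rep_bcomp a) h))"
proof -
  have "{ix. length ix = length (Rep_bcomp a) \<and> sorted_wrt (<) ix \<and>
      h = (\<Sum>j<length ix. Poly_Mapping.single (ix ! j) (Rep_bcomp a ! j))} = GS (sorted_wrt (<)) (Rep_bcomp a) h"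
    by (auto simp: GS_def Sm_sum)
  then show ?thesis by (simp add: Mser_def)
qed

lemma sum_keys_single: "(\<And>a. F a 0 = 0) \<Longrightarrow>
    (\<Sum>a\<in>keys (Poly_Mapping.single b r). F a (lookup (Poly_Mapping.single b r) a)) = F b r"
  by (cases "r = 0") auto

lemma of_nat_card_filter: "finite E \<Longrightarrow> of_nat (card {x\<in>E. P x}) = (\<Sum>x\<in>E. if P x then 1 else (0::'k::comm_semiring_1))"
proof -
  assume fE: "finite E"
  have "card {x\<in>E. P x} = (\<Sum>x\<in>{x\<in>E. P x}. 1)" by simp
  then have "of_nat (card {x\<in>E. P x}) = (\<Sum>x\<in>{x\<in>E. P x}. (1::'k))" by simp
  also have "\<dots> = (\<Sum>x\<in>E. if P x then 1 else 0)" using fE by (rule sum.inter_filter)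
  finally show ?thesis .
qed

lemma of_nat_card_filter_w: "finite E \<Longrightarrow> c * of_nat (card {x\<in>E. P x}) = (\<Sum>x\<in>E. if P x then c else (0::'k::comm_semiring_1))"
  by (simp add: of_nat_card_filter sum_distrib_left) (rule sum.cong, auto)

lemma pmult_scale_left: "pmult (\<lambda>h. c * F h) G h = c * pmult F G (h::nat \<Rightarrow>\<^sub>0 'b::comm_monoid_add)"
  by (simp add: pmult_Dec sum_distrib_left mult.assoc)

lemma pmult_scale_right: "pmult F (\<lambda>h. c * G h) h = c * pmult F G (h::nat \<Rightarrow>\<^sub>0 'b::comm_monoid_add)"
  by (simp add: pmult_Dec sum_distrib_left ac_simps)

lemma LIN_comul:
  "(\<Sum>p\<in>keys (qcomul c). lookup (qcomul c) p * T p)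
     = (\<Sum>a\<in>keys c. lookup (c::'b::zero bcomp \<Rightarrow>\<^sub>0 'k::comm_semiring_1) a * (\<Sum>i\<in>{0..length (Rep_bcomp a)}. T (bc_take i a, bc_drop i a)))"
proof -
  define Sg where "Sg = Sigma (keys c) (\<lambda>a. {0..length (Rep_bcomp a)})"
  define \<phi> where "\<phi> = (\<lambda>(a, i). (bc_take i a, bc_drop i (a::'b bcomp)))"
  have fSg: "finite Sg" by (simp add: Sg_def)
  have cat_td: "cat (bc_take i a) (bc_drop i a) = a" if "i \<le> length (Rep_bcomp a)" for i a
    using take_drop_eq_iff[OF that, of "bc_take i a" "bc_drop i a"] by simp
  have inj: "inj_on \<phi> Sg"
  proof (rule inj_onI)
    fix u v assume u: "u \<in> Sg" and v: "v \<in> Sg" and e: "\<phi> u = \<phi> v"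
    obtain a i where uu: "u = (a, i)" by (cases u)
    obtain a' i' where vv: "v = (a', i')" by (cases v)
    have i: "i \<le> length (Rep_bcomp a)" "i' \<le> length (Rep_bcomp a')" using u v uu vv by (auto simp: Sg_def)
    have e': "bc_take i a = bc_take i' a'" "bc_drop i a = bc_drop i' a'" using e uu vv by (auto simp: \<phi>_def)
    have 1: "i = length (Rep_bcomp (bc_take i a)) \<and> a = cat (bc_take i a) (bc_drop i a)"
      using take_drop_eq_iff[OF i(1)] by blast
    have 2: "i' = length (Rep_bcomp (bc_take i' a')) \<and> a' = cat (bc_take i' a') (bc_drop i' a')"
      using take_drop_eq_iff[OF i(2)] by blast
    show "u = v" using 1 2 e' uu vv by metis
  qed
  have sub: "keys (qcomul c) \<subseteq> \<phi> ` Sg"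
  proof
    fix p assume p: "p \<in> keys (qcomul c)"
    obtain x y where pp: "p = (x, y)" by (cases p)
    have k: "cat x y \<in> keys c" using p pp by (simp add: in_keys_iff lookup_qcomul)
    have il: "length (Rep_bcomp x) \<le> length (Rep_bcomp (cat x y))" by (simp add: Rep_cat)
    have "\<phi> (cat x y, length (Rep_bcomp x)) = (x, y)"
      using take_drop_eq_iff[OF il, of x y] by (simp add: \<phi>_def)
    moreover have "(cat x y, length (Rep_bcomp x)) \<in> Sg" using k il by (simp add: Sg_def)
    ultimately show "p \<in> \<phi> ` Sg" using pp by (metis image_eqI)
  qed
  have "(\<Sum>p\<in>keys (qcomul c). lookup (qcomul c) p * T p) = (\<Sum>p\<in>\<phi> ` Sg. lookup (qcomul c) p * T p)"
    by (rule sum.mono_neutral_left) (use fSg sub in \<open>auto simp: in_keys_iff\<close>)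
  also have "\<dots> = (\<Sum>u\<in>Sg. lookup (qcomul c) (\<phi> u) * T (\<phi> u))"
    by (subst sum.reindex[OF inj]) simp
  also have "\<dots> = (\<Sum>u\<in>Sg. lookup c (fst u) * T (bc_take (snd u) (fst u), bc_drop (snd u) (fst u)))"
    by (rule sum.cong[OF refl]) (auto simp: Sg_def \<phi>_def lookup_qcomul cat_td)
  also have "\<dots> = (\<Sum>a\<in>keys c. \<Sum>i\<in>{0..length (Rep_bcomp a)}. lookup c a * T (bc_take i a, bc_drop i a))"
    unfolding Sg_def by (subst sum.Sigma) (simp_all add: split_def)
  finally show ?thesis by (simp add: sum_distrib_left)
qed

locale qsb =
  assumes nzc: "\<And>b c::'b::comm_monoid_add. b \<noteq> 0 \<Longrightarrow> c \<noteq> 0 \<Longrightarrow> b + c \<noteq> 0"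
    and fin_add: "\<And>a::'b. finite {(b, c). b + c = a}"
begin

lemma add_eq_0: "(b::'b) + c = 0 \<longleftrightarrow> b = 0 \<and> c = 0"
  by (cases "b = 0"; cases "c = 0") (auto dest: nzc)

lemma sum_list_nz: "xs \<noteq> [] \<Longrightarrow> 0 \<notin> set xs \<Longrightarrow> sum_list (xs::'b list) \<noteq> 0"
proof (induction xs)
  case Nil then show ?case by simp
next
  case (Cons x xs)
  then show ?case by (cases "xs = []") (auto simp: add_eq_0)
qed

lemma keys_Sm:
  "length ix = length xs \<Longrightarrow> 0 \<notin> set xs \<Longrightarrow> keys (Sm ix (xs::'b list)) = set ix"
proof (induction ix arbitrary: xs)
  case Nil then show ?case by simp
next
  case (Cons i ix)
  then obtain x xs' where xs: "xs = x # xs'" by (cases xs) auto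
  with Cons have IH: "keys (Sm ix xs') = set ix" and x: "x \<noteq> 0" by auto
  show ?case
    using x IH xs
    by (auto simp: in_keys_iff lookup_add lookup_single when_def add_eq_0 split: if_splits)
qed

lemma keys_dec: "f + g = h \<Longrightarrow> keys (f::nat \<Rightarrow>\<^sub>0 'b) \<subseteq> keys h"
  by (auto simp: in_keys_iff lookup_add add_eq_0)

lemma keys_dec2: "f + g = h \<Longrightarrow> keys (g::nat \<Rightarrow>\<^sub>0 'b) \<subseteq> keys h"
  by (auto simp: in_keys_iff lookup_add add_eq_0)

lemma Mser_cmp: "Mser (a::'b bcomp) f = (if cmp f = a then 1 else 0)"
proof -
  let ?A = "Rep_bcomp a"
  let ?S = "{ix. length ix = length ?A \<and> sorted_wrt (<) ix \<and>
      f = (\<Sum>j<length ix. Poly_Mapping.single (ix ! j) (?A ! j))}"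
  have S: "?S = {ix. length ix = length ?A \<and> sorted_wrt (<) ix \<and> f = Sm ix ?A}"
    by (auto simp: Sm_sum)
  have "?S = (if cmp f = a then {sorted_list_of_set (keys f)} else {})"
  proof (cases "cmp f = a")
    case True
    then have cf: "comp f = ?A" by (metis Rep_cmp)
    have "?S = {sorted_list_of_set (keys f)}"
    proof (unfold S, intro equalityI subsetI)
      fix ix assume "ix \<in> {ix. length ix = length ?A \<and> sorted_wrt (<) ix \<and> f = Sm ix ?A}"
      then have ix: "length ix = length ?A" "sorted_wrt (<) ix" "f = Sm ix ?A" by auto
      then have "keys f = set ix" using keys_Sm[OF ix(1) Rep_bcomp_nz[of a]] by simp
      then show "ix \<in> {sorted_list_of_set (keys f)}" using ix strict_sorted_list_of_set by auto
    next
      fix ix assume "ix \<in> {sorted_list_of_set (keys f)}"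
      then show "ix \<in> {ix. length ix = length ?A \<and> sorted_wrt (<) ix \<and> f = Sm ix ?A}"
        using cf Sm_comp[of f] by (auto simp: length_comp[symmetric])
    qed
    with True show ?thesis by simp
  next
    case False
    have "?S = {}"
    proof (unfold S, rule ccontr)
      assume "{ix. length ix = length ?A \<and> sorted_wrt (<) ix \<and> f = Sm ix ?A} \<noteq> {}"
      then obtain ix where ix: "length ix = length ?A" "sorted_wrt (<) ix" "f = Sm ix ?A" by auto
      then have "comp f = ?A" using comp_Sm[of ix ?A] by (simp add: filter_nz_id Rep_bcomp_nz)
      then have "cmp f = a" by (simp add: cmp_def Rep_bcomp_inverse)
      with False show False by simp
    qed
    with False show ?thesis by simp
  qed
  then show ?thesis by (simp add: Mser_def)
qed

lemma ser_lookup: "ser (c::'b bcomp \<Rightarrow>\<^sub>0 'k::comm_semiring_1) h = lookup c (cmp h)"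
proof -
  have "ser c h = (\<Sum>a\<in>keys c. if a = cmp h then lookup c a else 0)"
    unfolding ser_def Mser_cmp by (rule sum.cong) auto
  also have "\<dots> = lookup c (cmp h)"
    by (simp add: in_keys_iff)
  finally show ?thesis .
qed

lemma ser_inj: "inj (ser :: ('b bcomp \<Rightarrow>\<^sub>0 'k::comm_semiring_1) \<Rightarrow> _)"
proof (rule injI)
  fix c d :: "'b bcomp \<Rightarrow>\<^sub>0 'k::comm_semiring_1"
  assume "ser c = ser d"
  then have "\<And>a. ser c (mono a) = ser d (mono a)" by simp
  then show "c = d" by (intro poly_mapping_eqI) (simp add: ser_lookup)
qed


lemma fin_Dec: "finite (Dec (h::nat \<Rightarrow>\<^sub>0 'b))"
proof -
  let ?K = "keys h"
  define \<phi> where "\<phi> = (\<lambda>(p::(nat \<Rightarrow>\<^sub>0 'b) \<times> (nat \<Rightarrow>\<^sub>0 'b)).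
      restrict (\<lambda>q. (lookup (fst p) q, lookup (snd p) q)) ?K)"
  have "\<phi> ` Dec h \<subseteq> PiE ?K (\<lambda>q. {(b, c). b + c = lookup h q})"
    by (auto simp: \<phi>_def Dec_def lookup_add restrict_PiE_iff)
  moreover have "finite (PiE ?K (\<lambda>q. {(b, c). b + c = lookup h q}))"
    by (intro finite_PiE) (auto intro: fin_add)
  ultimately have "finite (\<phi> ` Dec h)" by (rule finite_subset)
  moreover have "inj_on \<phi> (Dec h)"
  proof (rule inj_onI)
    fix p p' assume p: "p \<in> Dec h" and p': "p' \<in> Dec h" and e: "\<phi> p = \<phi> p'"
    obtain f g where pp: "p = (f, g)" by (cases p)
    obtain f' g' where pp': "p' = (f', g')" by (cases p')
    have d: "f + g = h" "f' + g' = h" using p p' pp pp' by (auto simp: Dec_def)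
    have "lookup f q = lookup f' q \<and> lookup g q = lookup g' q" for q
    proof (cases "q \<in> ?K")
      case True
      then show ?thesis using fun_cong[OF e, of q] pp pp' by (simp add: \<phi>_def)
    next
      case False
      then have "q \<notin> keys f" "q \<notin> keys f'" "q \<notin> keys g" "q \<notin> keys g'"
        using keys_dec[OF d(1)] keys_dec2[OF d(1)] keys_dec[OF d(2)] keys_dec2[OF d(2)] by auto
      then show ?thesis by (simp add: in_keys_iff)
    qed
    then show "p = p'" using pp pp' by (auto intro: poly_mapping_eqI)
  qed
  ultimately show ?thesis by (rule finite_imageD)
qed

lemma pmult_assoc: "pmult (pmult F G) H = pmult F (pmult G H :: (nat \<Rightarrow>\<^sub>0 'b) \<Rightarrow> 'k::comm_semiring_1)"
proof
  fix h :: "nat \<Rightarrow>\<^sub>0 'b"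
  have "pmult (pmult F G) H h = (\<Sum>p\<in>Dec h. \<Sum>q\<in>Dec (fst p). F (fst q) * G (snd q) * H (snd p))"
    by (simp add: pmult_Dec sum_distrib_right)
  also have "\<dots> = (\<Sum>x\<in>Sigma (Dec h) (\<lambda>p. Dec (fst p)). F (fst (snd x)) * G (snd (snd x)) * H (snd (fst x)))"
    by (subst sum.Sigma) (auto simp: fin_Dec split_def)
  also have "\<dots> = (\<Sum>x\<in>Sigma (Dec h) (\<lambda>p. Dec (snd p)). F (fst (fst x)) * (G (fst (snd x)) * H (snd (snd x))))"
  proof (rule sum.reindex_bij_witness[where j = "\<lambda>((u, w), (f, g)). ((f, g + w), (g, w))"
        and i = "\<lambda>((f, v), (g, w)). ((f + g, w), (f, g))"])
  qed (auto simp: Dec_def add.assoc mult.assoc)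
  also have "\<dots> = (\<Sum>p\<in>Dec h. \<Sum>q\<in>Dec (snd p). F (fst p) * (G (fst q) * H (snd q)))"
    by (subst sum.Sigma) (auto simp: fin_Dec split_def)
  also have "\<dots> = pmult F (pmult G H) h"
    by (simp add: pmult_Dec sum_distrib_left)
  finally show "pmult (pmult F G) H h = pmult F (pmult G H) h" .
qed

lemma Dec_zero_in: "(0, h) \<in> Dec h" "(h, 0) \<in> Dec h"
  by (auto simp: Dec_def)

lemma pmult_pone_left: "pmult pone (F::(nat \<Rightarrow>\<^sub>0 'b) \<Rightarrow> 'k) h = (F h :: 'k::comm_semiring_1)"
proof -
  have "pmult pone F h = (\<Sum>p\<in>Dec h. if p = (0, h) then F h else 0)"
    unfolding pmult_Dec by (rule sum.cong) (auto simp: pone_def Dec_def)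
  also have "\<dots> = F h" using Dec_zero_in(1)[of h] by (simp add: sum.delta[OF fin_Dec])
  finally show ?thesis .
qed

lemma pmult_pone_right: "pmult (F::(nat \<Rightarrow>\<^sub>0 'b) \<Rightarrow> 'k) pone h = (F h :: 'k::comm_semiring_1)"
proof -
  have "pmult F pone h = (\<Sum>p\<in>Dec h. if p = (h, 0) then F h else 0)"
    unfolding pmult_Dec by (rule sum.cong) (auto simp: pone_def Dec_def)
  also have "\<dots> = F h" using Dec_zero_in(2)[of h] by (simp add: sum.delta[OF fin_Dec])
  finally show ?thesis .
qed

lemma ser_add: "ser (c + d) h = ser c h + ser (d::'b bcomp \<Rightarrow>\<^sub>0 'k::comm_semiring_1) h"
  by (simp add: ser_lookup lookup_add)

lemma ser_qsmult: "ser (qsmult r c) h = r * ser (c::'b bcomp \<Rightarrow>\<^sub>0 'k::comm_semiring_1) h"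
  by (simp add: ser_lookup lookup_qsmult)

lemma ser_sum: "ser (\<Sum>i\<in>I. c i) h = (\<Sum>i\<in>I. ser (c i :: 'b bcomp \<Rightarrow>\<^sub>0 'k::comm_semiring_1) h)"
  by (simp add: ser_lookup lookup_sum)

lemma ser_single: "ser (Poly_Mapping.single a r) h = r * Mser (a::'b bcomp) h"
  by (simp add: ser_lookup Mser_cmp lookup_single when_def)

lemma pmult_qsym:
  "pmult (ser (a::'b bcomp \<Rightarrow>\<^sub>0 'k::comm_semiring_1)) (ser b) h = pmult (ser a) (ser b) (mono (cmp h)) "
proof -
  define ps where "ps = sorted_list_of_set (keys (h::nat \<Rightarrow>\<^sub>0 'b))"
  have ps: "sorted_wrt (<) ps" "distinct ps" "set ps = keys h"
    by (auto simp: ps_def)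
  have hm: "pk ps h = mono (cmp h)" by (simp add: ps_def pk_mono)
  have "pmult (ser a) (ser b) h = (\<Sum>p\<in>Dec h. ser a (fst p) * ser b (snd p))"
    by (simp add: pmult_Dec)
  also have "\<dots> = (\<Sum>p\<in>Dec (pk ps h). ser a (fst p) * ser (b::'b bcomp \<Rightarrow>\<^sub>0 'k::comm_semiring_1) (snd p))"
  proof (rule sum.reindex_bij_witness[where j = "\<lambda>(f, g). (pk ps f, pk ps g)"
        and i = "\<lambda>(f, g). (up ps f, up ps g)"])
    fix x assume x: "x \<in> Dec h"
    obtain f g where xx: "x = (f, g)" by (cases x)
    have d: "f + g = h" using x xx by (simp add: Dec_def)
    have kf: "keys f \<subseteq> set ps" "keys g \<subseteq> set ps" using keys_dec[OF d] keys_dec2[OF d] ps by auto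
    show "(case case x of (f, g) \<Rightarrow> (pk ps f, pk ps g) of (f, g) \<Rightarrow> (up ps f, up ps g)) = x"
      using xx kf ps by (simp add: up_pk)
    show "(case x of (f, g) \<Rightarrow> (pk ps f, pk ps g)) \<in> Dec (pk ps h)"
      using xx d by (simp add: Dec_def pk_add[symmetric])
    show "ser a (fst (case x of (f, g) \<Rightarrow> (pk ps f, pk ps g))) *
        ser b (snd (case x of (f, g) \<Rightarrow> (pk ps f, pk ps g))) = ser a (fst x) * ser b (snd x)"
      using xx kf ps by (simp add: ser_lookup cmp_pk)
  next
    fix y assume y: "y \<in> Dec (pk ps h)"
    obtain f g where yy: "y = (f, g)" by (cases y)
    have d: "f + g = pk ps h" using y yy by (simp add: Dec_def)
    have kf: "keys f \<subseteq> {..<length ps}" "keys g \<subseteq> {..<length ps}"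
      using keys_dec[OF d] keys_dec2[OF d] keys_pk[of ps h] by auto
    show "(case case y of (f, g) \<Rightarrow> (up ps f, up ps g) of (f, g) \<Rightarrow> (pk ps f, pk ps g)) = y"
      using yy kf ps by (simp add: pk_up)
    have "up ps f + up ps g = h"
      using ps d by (simp add: up_add[symmetric] up_pk)
    then show "(case y of (f, g) \<Rightarrow> (up ps f, up ps g)) \<in> Dec h"
      using yy by (simp add: Dec_def)
  qed
  also have "\<dots> = pmult (ser a) (ser b) (mono (cmp h))"
    by (simp add: pmult_Dec hm)
  finally show ?thesis .
qed

lemma fin_supp_pmult:
  "finite {\<gamma>. pmult (ser (a::'b bcomp \<Rightarrow>\<^sub>0 'k::comm_semiring_1)) (ser b) (mono \<gamma>) \<noteq> (0::'k)}"
proof -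
  define V0 where "V0 = insert 0 (\<Union>\<alpha>\<in>keys a \<union> keys b. set (Rep_bcomp (\<alpha>::'b bcomp)))"
  define V where "V = (\<lambda>(x, y). x + y) ` (V0 \<times> V0)"
  define L where "L = Max (insert 0 ((\<lambda>\<alpha>. length (Rep_bcomp \<alpha>)) ` keys a))
                    + Max (insert 0 ((\<lambda>\<alpha>. length (Rep_bcomp \<alpha>)) ` keys b))"
  have "{\<gamma>. pmult (ser a) (ser b) (mono \<gamma>) \<noteq> (0::'k)} \<subseteq> Abs_bcomp ` {xs. set xs \<subseteq> V \<and> length xs \<le> L}"
  proof
    fix \<gamma> assume "\<gamma> \<in> {\<gamma>. pmult (ser a) (ser b) (mono \<gamma>) \<noteq> (0::'k)}"
    then have "(\<Sum>p\<in>Dec (mono \<gamma>). ser a (fst p) * ser b (snd p)) \<noteq> (0::'k)"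
      by (simp add: pmult_Dec)
    then obtain p where p: "p \<in> Dec (mono \<gamma>)" "ser a (fst p) * ser b (snd p) \<noteq> (0::'k)"
      using sum.not_neutral_contains_not_neutral by blast
    obtain f g where pp: "p = (f, g)" by (cases p)
    have d: "f + g = mono \<gamma>" using p pp by (simp add: Dec_def)
    have ka: "cmp f \<in> keys a" and kb: "cmp g \<in> keys b"
      using p pp by (auto simp: ser_lookup in_keys_iff)
    have R: "Rep_bcomp \<gamma> = comp (f + g)" by (simp add: d comp_mono)
    have "length (comp (f + g)) \<le> card (keys f) + card (keys g)"
    proof -
      have "card (keys (f + g)) \<le> card (keys f \<union> keys g)"
        by (intro card_mono) (auto dest: subsetD[OF keys_add])
      also have "\<dots> \<le> card (keys f) + card (keys g)" by (rule card_Un_le)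
      finally show ?thesis by (simp add: length_comp)
    qed
    also have "\<dots> \<le> L"
    proof -
      have "card (keys f) = length (Rep_bcomp (cmp f))" by (simp add: Rep_cmp length_comp)
      also have "\<dots> \<le> Max (insert 0 ((\<lambda>\<alpha>. length (Rep_bcomp \<alpha>)) ` keys a))"
        using ka by (intro Max_ge) auto
      finally have 1: "card (keys f) \<le> Max (insert 0 ((\<lambda>\<alpha>. length (Rep_bcomp \<alpha>)) ` keys a))" .
      have "card (keys g) = length (Rep_bcomp (cmp g))" by (simp add: Rep_cmp length_comp)
      also have "\<dots> \<le> Max (insert 0 ((\<lambda>\<alpha>. length (Rep_bcomp \<alpha>)) ` keys b))"
        using kb by (intro Max_ge) auto
      finally have 2: "card (keys g) \<le> Max (insert 0 ((\<lambda>\<alpha>. length (Rep_bcomp \<alpha>)) ` keys b))" .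
      show ?thesis using 1 2 by (simp add: L_def)
    qed
    finally have len: "length (Rep_bcomp \<gamma>) \<le> L" using R by simp
    have vf: "lookup f q \<in> V0" for q
    proof (cases "q \<in> keys f")
      case True
      then have "lookup f q \<in> set (Rep_bcomp (cmp f))" by (simp add: Rep_cmp comp_def)
      then show ?thesis using ka by (auto simp: V0_def)
    qed (simp add: V0_def in_keys_iff)
    have vg: "lookup g q \<in> V0" for q
    proof (cases "q \<in> keys g")
      case True
      then have "lookup g q \<in> set (Rep_bcomp (cmp g))" by (simp add: Rep_cmp comp_def)
      then show ?thesis using kb by (auto simp: V0_def)
    qed (simp add: V0_def in_keys_iff)
    have "set (Rep_bcomp \<gamma>) \<subseteq> V"
    proof
      fix x assume "x \<in> set (Rep_bcomp \<gamma>)"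
      then obtain q where "x = lookup (f + g) q" using R by (auto simp: comp_def)
      then have "x = lookup f q + lookup g q" by (simp add: lookup_add)
      then show "x \<in> V" using vf[of q] vg[of q] by (auto simp: V_def)
    qed
    with len show "\<gamma> \<in> Abs_bcomp ` {xs. set xs \<subseteq> V \<and> length xs \<le> L}"
      by (intro image_eqI[of _ _ "Rep_bcomp \<gamma>"]) (auto simp: Rep_bcomp_inverse)
  qed
  moreover have "finite V" unfolding V_def V0_def by (intro finite_imageI) auto
  ultimately show ?thesis
    by (rule finite_subset[OF _ finite_imageI[OF finite_lists_length_le]])
qed

lemma qsym_mult: "\<exists>c. ser c = pmult (ser a) (ser (b::'b bcomp \<Rightarrow>\<^sub>0 'k::comm_semiring_1))"
proof -
  define c where "c = Abs_poly_mapping (\<lambda>\<gamma>. pmult (ser a) (ser b) (mono \<gamma>) :: 'k)"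
  have lc: "lookup c \<gamma> = pmult (ser a) (ser b) (mono \<gamma>)" for \<gamma>
    unfolding c_def using fin_supp_pmult[of a b] by simp
  have "ser c = pmult (ser a) (ser b)"
  proof
    fix h show "ser c h = pmult (ser a) (ser b) h"
      by (simp add: ser_lookup lc pmult_qsym[symmetric])
  qed
  then show ?thesis by blast
qed

lemma qmult_ser: "ser (qmult a b) = pmult (ser a) (ser (b::'b bcomp \<Rightarrow>\<^sub>0 'k::comm_semiring_1))"
proof -
  have "\<exists>!c. ser c = pmult (ser a) (ser b)"
    using qsym_mult[of a b] ser_inj by (metis injD)
  then show ?thesis unfolding qmult_def by (rule theI')
qed


lemma ser_single1: "ser (Poly_Mapping.single \<alpha> (1::'k::comm_semiring_1)) h = (if cmp h = (\<alpha>::'b bcomp) then 1 else 0)"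
  by (simp add: ser_lookup lookup_single when_def)

lemma lookup_qmult_single_cmp:
  "lookup (qmult (Poly_Mapping.single (\<alpha>::'b bcomp) (1::'k::comm_semiring_1)) (Poly_Mapping.single \<beta> 1)) (cmp f)
    = (\<Sum>r\<in>Dec f. if cmp (fst r) = \<alpha> \<and> cmp (snd r) = \<beta> then 1 else 0)"
proof -
  have "lookup (qmult (Poly_Mapping.single \<alpha> (1::'k)) (Poly_Mapping.single \<beta> 1)) (cmp f)
      = ser (qmult (Poly_Mapping.single \<alpha> (1::'k)) (Poly_Mapping.single \<beta> 1)) f"
    by (simp add: ser_lookup)
  also have "\<dots> = (\<Sum>r\<in>Dec f. if cmp (fst r) = \<alpha> \<and> cmp (snd r) = \<beta> then 1 else 0)"
    unfolding qmult_ser pmult_Dec ser_single1 by (rule sum.cong) auto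
  finally show ?thesis .
qed

lemma tmult_cmp:
  "lookup (tmult x y) (cmp f, cmp g) = (\<Sum>r\<in>Dec f. \<Sum>s\<in>Dec g.
      lookup x (cmp (fst r), cmp (fst s)) * lookup (y::'b bcomp \<times> 'b bcomp \<Rightarrow>\<^sub>0 'k::comm_semiring_1) (cmp (snd r), cmp (snd s)))"
proof -
  have "lookup (tmult x y) (cmp f, cmp g) = (\<Sum>p\<in>keys x. \<Sum>q\<in>keys y. \<Sum>r\<in>Dec f. \<Sum>s\<in>Dec g.
      lookup x p * lookup y q * (if cmp (fst r) = fst p \<and> cmp (snd r) = fst q then 1 else 0)
        * (if cmp (fst s) = snd p \<and> cmp (snd s) = snd q then 1 else 0))"
    by (simp add: lookup_tmult lookup_qmult_single_cmp aux1)
  also have "\<dots> = (\<Sum>r\<in>Dec f. \<Sum>s\<in>Dec g. \<Sum>p\<in>keys x. \<Sum>q\<in>keys y.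
      lookup x p * lookup y q * (if cmp (fst r) = fst p \<and> cmp (snd r) = fst q then 1 else 0)
        * (if cmp (fst s) = snd p \<and> cmp (snd s) = snd q then 1 else 0))"
    by (rule sum4_swap)
  also have "\<dots> = (\<Sum>r\<in>Dec f. \<Sum>s\<in>Dec g.
      lookup x (cmp (fst r), cmp (fst s)) * lookup y (cmp (snd r), cmp (snd s)))"
  proof (intro sum.cong refl)
    fix r s
    have "(\<Sum>p\<in>keys x. \<Sum>q\<in>keys y.
      lookup x p * lookup y q * (if cmp (fst r) = fst p \<and> cmp (snd r) = fst q then 1 else 0)
        * (if cmp (fst s) = snd p \<and> cmp (snd s) = snd q then (1::'k) else 0))
      = (\<Sum>p\<in>keys x. \<Sum>q\<in>keys y. (if p = (cmp (fst r), cmp (fst s)) then lookup x p else 0)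
           * (if q = (cmp (snd r), cmp (snd s)) then lookup y q else 0))"
      by (intro sum.cong refl) auto
    also have "\<dots> = (\<Sum>p\<in>keys x. if p = (cmp (fst r), cmp (fst s)) then lookup x p else 0)
        * (\<Sum>q\<in>keys y. if q = (cmp (snd r), cmp (snd s)) then lookup y q else 0)"
      by (rule sum_product[symmetric])
    also have "\<dots> = lookup x (cmp (fst r), cmp (fst s)) * lookup y (cmp (snd r), cmp (snd s))"
      by (simp only: sum_keys_delta')
    finally show "(\<Sum>p\<in>keys x. \<Sum>q\<in>keys y.
      lookup x p * lookup y q * (if cmp (fst r) = fst p \<and> cmp (snd r) = fst q then 1 else 0)
        * (if cmp (fst s) = snd p \<and> cmp (snd s) = snd q then (1::'k) else 0))
      = lookup x (cmp (fst r), cmp (fst s)) * lookup y (cmp (snd r), cmp (snd s))" .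
  qed
  finally show ?thesis .
qed

lemma bialg: "qcomul (qmult a b) = tmult (qcomul a) (qcomul (b::'b bcomp \<Rightarrow>\<^sub>0 'k::comm_semiring_1))"
proof (rule poly_mapping_eqI)
  fix t :: "'b bcomp \<times> 'b bcomp"
  obtain \<gamma> \<delta> where t: "t = (\<gamma>, \<delta>)" by (cases t)
  define f where "f = mono \<gamma>"
  define g where "g = mono \<delta>"
  have gd: "\<gamma> = cmp f" "\<delta> = cmp g" by (simp_all add: f_def g_def)
  define N where "N = Poly_Mapping.degree f"
  have kf: "keys f \<subseteq> {..<N}" using in_keys_less_degree by (auto simp: N_def)
  have "lookup (qcomul (qmult a b)) (cmp f, cmp g) = lookup (qmult a b) (cmp (f + sh N g))"
    by (simp add: lookup_qcomul cmp_sh[OF kf])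
  also have "\<dots> = pmult (ser a) (ser b) (f + sh N g)"
    by (simp add: ser_lookup[symmetric] qmult_ser)
  also have "\<dots> = (\<Sum>p\<in>Dec (f + sh N g). lookup a (cmp (fst p)) * lookup b (cmp (snd p)))"
    by (simp add: pmult_Dec ser_lookup)
  also have "\<dots> = (\<Sum>x\<in>Dec f \<times> Dec g. lookup a (cat (cmp (fst (fst x))) (cmp (fst (snd x))))
      * lookup b (cat (cmp (snd (fst x))) (cmp (snd (snd x)))))"
  proof (rule sum.reindex_bij_witness[where j = "\<lambda>(u, v). ((lo N u, lo N v), (hi N u, hi N v))"
        and i = "\<lambda>x. (fst (fst x) + sh N (fst (snd x)), snd (fst x) + sh N (snd (snd x)))"])
    fix p assume p: "p \<in> Dec (f + sh N g)"
    obtain u v where pp: "p = (u, v)" by (cases p)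
    have d: "u + v = f + sh N g" using p pp by (simp add: Dec_def)
    show "(\<lambda>x. (fst (fst x) + sh N (fst (snd x)), snd (fst x) + sh N (snd (snd x))))
        ((\<lambda>(u, v). ((lo N u, lo N v), hi N u, hi N v)) p) = p"
      using pp by (simp add: lo_hi)
    have "lo N u + lo N v = lo N (u + v)" by (simp add: lo_add)
    also have "\<dots> = f" by (simp add: d lo_sh[OF kf])
    finally have 1: "lo N u + lo N v = f" .
    have "hi N u + hi N v = hi N (u + v)" by (simp add: hi_add)
    also have "\<dots> = g" by (simp add: d hi_sh[OF kf])
    finally have 2: "hi N u + hi N v = g" .
    show "(\<lambda>(u, v). ((lo N u, lo N v), hi N u, hi N v)) p \<in> Dec f \<times> Dec g"
      using pp 1 2 by (simp add: Dec_def)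
    have cu: "cmp w = cat (cmp (lo N w)) (cmp (hi N w))" for w :: "nat \<Rightarrow>\<^sub>0 'b"
      using cmp_sh[OF keys_lo, of N w "hi N w"] by (simp add: lo_hi)
    show "lookup a (cat (cmp (fst (fst ((\<lambda>(u, v). ((lo N u, lo N v), hi N u, hi N v)) p))))
          (cmp (fst (snd ((\<lambda>(u, v). ((lo N u, lo N v), hi N u, hi N v)) p))))) *
        lookup b (cat (cmp (snd (fst ((\<lambda>(u, v). ((lo N u, lo N v), hi N u, hi N v)) p))))
          (cmp (snd (snd ((\<lambda>(u, v). ((lo N u, lo N v), hi N u, hi N v)) p))))) =
        lookup a (cmp (fst p)) * lookup b (cmp (snd p))"
      using pp by (simp add: cu[symmetric])
  next
    fix x assume x: "x \<in> Dec f \<times> Dec g"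
    obtain r1 r2 s1 s2 where xx: "x = ((r1, r2), (s1, s2))" by (cases x) auto
    have d: "r1 + r2 = f" "s1 + s2 = g" using x xx by (auto simp: Dec_def)
    have k: "keys r1 \<subseteq> {..<N}" "keys r2 \<subseteq> {..<N}" using keys_dec[OF d(1)] keys_dec2[OF d(1)] kf by auto
    show "(\<lambda>(u, v). ((lo N u, lo N v), hi N u, hi N v))
        ((\<lambda>x. (fst (fst x) + sh N (fst (snd x)), snd (fst x) + sh N (snd (snd x)))) x) = x"
      using xx k by (simp add: lo_sh hi_sh)
    have "r1 + sh N s1 + (r2 + sh N s2) = (r1 + r2) + (sh N s1 + sh N s2)"
      by (simp add: add_ac)
    also have "\<dots> = f + sh N g" by (simp only: d[symmetric] sh_add)
    finally have "r1 + sh N s1 + (r2 + sh N s2) = f + sh N g" .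
    then show "(\<lambda>x. (fst (fst x) + sh N (fst (snd x)), snd (fst x) + sh N (snd (snd x)))) x \<in> Dec (f + sh N g)"
      using xx by (simp only: Dec_def mem_Collect_eq case_prod_conv fst_conv snd_conv)
  qed
  also have "\<dots> = (\<Sum>r\<in>Dec f. \<Sum>s\<in>Dec g. lookup a (cat (cmp (fst r)) (cmp (fst s)))
      * lookup b (cat (cmp (snd r)) (cmp (snd s))))"
    by (simp add: sum.cartesian_product split_def)
  also have "\<dots> = lookup (tmult (qcomul a) (qcomul b)) (cmp f, cmp g)"
    by (simp add: tmult_cmp lookup_qcomul)
  finally show "lookup (qcomul (qmult a b)) t = lookup (tmult (qcomul a) (qcomul b)) t"
    using t gd by simp
qed

lemma Dec_zero: "Dec (0::nat \<Rightarrow>\<^sub>0 'b) = {(0, 0)}"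
proof -
  have z: "f = 0 \<and> g = 0" if fg: "f + g = (0::nat \<Rightarrow>\<^sub>0 'b)" for f g
  proof -
    have "keys f = {}" using keys_dec[OF fg] by simp
    moreover have "keys g = {}" using keys_dec2[OF fg] by simp
    ultimately show ?thesis by simp
  qed
  show ?thesis
  proof (intro equalityI subsetI)
    fix p assume "p \<in> Dec (0::nat \<Rightarrow>\<^sub>0 'b)"
    then obtain f g where "p = (f, g)" "f + g = 0" by (auto simp: Dec_def)
    then show "p \<in> {(0, 0)}" using z by blast
  qed (simp add: Dec_def)
qed

lemma counit_mult: "qcounit (qmult a b) = qcounit a * qcounit (b::'b bcomp \<Rightarrow>\<^sub>0 'k::comm_semiring_1)"
proof -
  have "qcounit (qmult a b) = ser (qmult a b) 0" by (simp add: qcounit_def ser_lookup cmp_zero)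
  also have "\<dots> = ser a 0 * ser b 0" by (simp add: qmult_ser pmult_Dec Dec_zero)
  finally show ?thesis by (simp add: qcounit_def ser_lookup cmp_zero)
qed

lemma ser_qunit: "ser (qunit :: 'b bcomp \<Rightarrow>\<^sub>0 'k::comm_semiring_1) = pone"
proof
  fix h :: "nat \<Rightarrow>\<^sub>0 'b"
  have "(Abs_bcomp [] = cmp h) = (h = 0)" using cmp_eq_nil[of h] by auto
  then show "ser (qunit :: 'b bcomp \<Rightarrow>\<^sub>0 'k::comm_semiring_1) h = pone h"
    by (simp add: ser_lookup qunit_def pone_def lookup_single when_def)
qed

lemma comul_unit: "qcomul (qunit :: 'b bcomp \<Rightarrow>\<^sub>0 'k::comm_semiring_1) = tunit"
  by (rule poly_mapping_eqI) (auto simp: lookup_qcomul qunit_def tunit_def lookup_single when_def cat_eq_nil cat_eq_nil' split: if_splits)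

lemma counit_unit: "qcounit (qunit :: 'b bcomp \<Rightarrow>\<^sub>0 'k::comm_semiring_1) = 1"
  by (simp add: qcounit_def qunit_def)


lemma jcomp_nz: "(\<forall>j\<in>set J. 0 < j) \<Longrightarrow> sum_list J = length D \<Longrightarrow> 0 \<notin> set D \<Longrightarrow> 0 \<notin> set (jcomp J (D::'b list))"
proof (induction J arbitrary: D)
  case Nil then show ?case by simp
next
  case (Cons j J)
  have "take j D \<noteq> []" using Cons.prems by auto
  moreover have "0 \<notin> set (take j D)" using Cons.prems(3) by (meson in_set_takeD)
  ultimately have "sum_list (take j D) \<noteq> 0" by (rule sum_list_nz)
  moreover have "0 \<notin> set (jcomp J (drop j D))"
    using Cons.prems by (intro Cons.IH) (auto dest: in_set_dropD)
  ultimately show ?case by simp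
qed

lemma fin_GS: "0 \<notin> set xs \<Longrightarrow> finite (GS P (xs::'b list) h)"
proof -
  assume nz: "0 \<notin> set xs"
  have "GS P xs h \<subseteq> {ix. set ix \<subseteq> keys h \<and> length ix = length xs}"
    using keys_Sm nz by (auto simp: GS_def)
  moreover have "finite {ix. set ix \<subseteq> keys h \<and> length ix = length xs}"
    by (rule finite_lists_length_eq) simp
  ultimately show ?thesis by (rule finite_subset)
qed

lemma PL:
  assumes a: "0 \<notin> set \<alpha>" and b: "0 \<notin> set \<beta>"
  shows "pmult (\<lambda>h. of_nat (card (GS P \<alpha> h))) (\<lambda>h. of_nat (card (GS Q \<beta> h))) h
    = (of_nat (card (GS (\<lambda>ks. P (take (length \<alpha>) ks) \<and> Q (drop (length \<alpha>) ks)) (\<alpha> @ (\<beta>::'b list)) h)) :: 'k::comm_semiring_1)"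
proof -
  define m where "m = length \<alpha>"
  let ?A = "Sigma (Dec h) (\<lambda>p. GS P \<alpha> (fst p) \<times> GS Q \<beta> (snd p))"
  let ?B = "GS (\<lambda>ks. P (take m ks) \<and> Q (drop m ks)) (\<alpha> @ \<beta>) h"
  have "pmult (\<lambda>h. of_nat (card (GS P \<alpha> h))) (\<lambda>h. of_nat (card (GS Q \<beta> h))) h
      = (\<Sum>p\<in>Dec h. of_nat (card (GS P \<alpha> (fst p) \<times> GS Q \<beta> (snd p))) :: 'k)"
    by (simp add: pmult_Dec card_cartesian_product)
  also have "\<dots> = of_nat (card ?A)"
    using fin_Dec fin_GS[OF a] fin_GS[OF b] by (simp add: card_SigmaI)
  also have "card ?A = card ?B"
  proof (rule bij_betw_same_card[of "\<lambda>x. fst (snd x) @ snd (snd x)"], rule bij_betw_byWitness[where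
        f' = "\<lambda>ks. ((Sm (take m ks) \<alpha>, Sm (drop m ks) \<beta>), (take m ks, drop m ks))"])
    show "\<forall>x\<in>?A. ((Sm (take m (fst (snd x) @ snd (snd x))) \<alpha>, Sm (drop m (fst (snd x) @ snd (snd x))) \<beta>),
        (take m (fst (snd x) @ snd (snd x)), drop m (fst (snd x) @ snd (snd x)))) = x"
      by (auto simp: GS_def m_def)
    show "\<forall>ks\<in>?B. fst (snd ((Sm (take m ks) \<alpha>, Sm (drop m ks) \<beta>), (take m ks, drop m ks))) @
        snd (snd ((Sm (take m ks) \<alpha>, Sm (drop m ks) \<beta>), (take m ks, drop m ks))) = ks"
      by simp
    show "(\<lambda>x. fst (snd x) @ snd (snd x)) ` ?A \<subseteq> ?B"
      by (auto simp: GS_def m_def Dec_def Sm_append2)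
    show "(\<lambda>ks. ((Sm (take m ks) \<alpha>, Sm (drop m ks) \<beta>), (take m ks, drop m ks))) ` ?B \<subseteq> ?A"
    proof
      fix x assume "x \<in> (\<lambda>ks. ((Sm (take m ks) \<alpha>, Sm (drop m ks) \<beta>), (take m ks, drop m ks))) ` ?B"
      then obtain ks where ks: "ks \<in> ?B" and xx: "x = ((Sm (take m ks) \<alpha>, Sm (drop m ks) \<beta>), (take m ks, drop m ks))"
        by auto
      have l: "length ks = m + length \<beta>" "Sm ks (\<alpha> @ \<beta>) = h" using ks by (auto simp: GS_def m_def)
      have "Sm (take m ks @ drop m ks) (\<alpha> @ \<beta>) = Sm (take m ks) \<alpha> + Sm (drop m ks) \<beta>"
        by (rule Sm_append2) (use l in \<open>simp add: m_def\<close>)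
      then have "Sm (take m ks) \<alpha> + Sm (drop m ks) \<beta> = h" using l by simp
      then show "x \<in> ?A" using xx ks l by (auto simp: GS_def Dec_def m_def)
    qed
  qed
  finally show ?thesis by (simp add: m_def)
qed

lemma ser_antipode:
  "ser (qantipode (Poly_Mapping.single \<beta> (1::'k::comm_ring_1))) h
     = (-1) ^ length (Rep_bcomp \<beta>) * of_nat (card (GS (sorted_wrt (\<lambda>x y. y \<le> x)) (Rep_bcomp (\<beta>::'b bcomp)) h))"
proof -
  define B where "B = Rep_bcomp \<beta>"
  define n where "n = length B"
  define D where "D = rev B"
  have nzD: "0 \<notin> set D" by (simp add: D_def B_def Rep_bcomp_nz)
  have jn: "0 \<notin> set (jcomp J D)" if "J \<in> nat_compositions n" for J
    using that nzD by (intro jcomp_nz) (auto simp: nat_compositions_def n_def D_def)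
  have q: "qantipode (Poly_Mapping.single \<beta> (1::'k))
      = (\<Sum>J\<in>nat_compositions n. Poly_Mapping.single (Abs_bcomp (jcomp J D)) ((-1)^n))"
    unfolding qantipode_def
    by (subst sum_keys_single[where F = "\<lambda>a v. \<Sum>J\<in>nat_compositions (length (Rep_bcomp a)).
        Poly_Mapping.single (Abs_bcomp (jcomp J (rev (Rep_bcomp a)))) ((- 1) ^ length (Rep_bcomp a) * v)"])
      (simp_all add: n_def D_def B_def)
  have "ser (qantipode (Poly_Mapping.single \<beta> (1::'k))) h
      = (\<Sum>J\<in>nat_compositions n. (-1)^n * Mser (Abs_bcomp (jcomp J D)) h)"
    by (simp add: q ser_sum ser_single)
  also have "\<dots> = (-1)^n * (\<Sum>J\<in>nat_compositions n. of_nat (card (GS (sorted_wrt (<)) (jcomp J D) h)))"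
    unfolding sum_distrib_left by (intro sum.cong refl) (simp add: Mser_GS Abs_bcomp_inv jn)
  also have "(\<Sum>J\<in>nat_compositions n. of_nat (card (GS (sorted_wrt (<)) (jcomp J D) h)))
      = (of_nat (card (Sigma (nat_compositions n) (\<lambda>J. GS (sorted_wrt (<)) (jcomp J D) h))) :: 'k)"
    by (simp add: card_SigmaI finite_NC fin_GS jn)
  also have "card (Sigma (nat_compositions n) (\<lambda>J. GS (sorted_wrt (<)) (jcomp J D) h)) = card (GS sorted D h)"
  proof (rule bij_betw_same_card[of "\<lambda>x. ex (fst x) (snd x)"], rule bij_betw_byWitness[where f' = rl])
    show "\<forall>x\<in>Sigma (nat_compositions n) (\<lambda>J. GS (sorted_wrt (<)) (jcomp J D) h). rl (ex (fst x) (snd x)) = x"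
      by (auto simp: GS_def nat_compositions_def length_jcomp rl_ex)
    show "\<forall>ks\<in>GS sorted D h. ex (fst (rl ks)) (snd (rl ks)) = ks"
      using rl_props by (auto simp: GS_def split: prod.splits)
    show "(\<lambda>x. ex (fst x) (snd x)) ` Sigma (nat_compositions n) (\<lambda>J. GS (sorted_wrt (<)) (jcomp J D) h) \<subseteq> GS sorted D h"
    proof
      fix y assume "y \<in> (\<lambda>x. ex (fst x) (snd x)) ` Sigma (nat_compositions n) (\<lambda>J. GS (sorted_wrt (<)) (jcomp J D) h)"
      then obtain J ps where y: "y = ex J ps" and J: "J \<in> nat_compositions n"
        and ps: "length ps = length J" "sorted_wrt (<) ps" "Sm ps (jcomp J D) = h"
        by (auto simp: GS_def length_jcomp)
      have "length y = length D" using y J ps by (simp add: length_ex nat_compositions_def n_def D_def)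
      moreover have "sorted y" using y ps by (simp add: sorted_ex strict_sorted_imp_sorted)
      moreover have "Sm y D = h" using y ps by (simp add: Sm_ex)
      ultimately show "y \<in> GS sorted D h" by (simp add: GS_def)
    qed
    show "rl ` GS sorted D h \<subseteq> Sigma (nat_compositions n) (\<lambda>J. GS (sorted_wrt (<)) (jcomp J D) h)"
    proof
      fix x assume "x \<in> rl ` GS sorted D h"
      then obtain ks where ks: "ks \<in> GS sorted D h" and x: "x = rl ks" by auto
      obtain J ps where r: "rl ks = (J, ps)" by (cases "rl ks")
      have k: "length ks = length D" "sorted ks" "Sm ks D = h" using ks by (auto simp: GS_def)
      note P = rl_props[OF k(2) r]
      have "J \<in> nat_compositions n" using P k by (simp add: nat_compositions_def n_def D_def)
      moreover have "Sm ps (jcomp J D) = h" using P k by (metis Sm_ex)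
      ultimately show "x \<in> Sigma (nat_compositions n) (\<lambda>J. GS (sorted_wrt (<)) (jcomp J D) h)"
        using x r P by (simp add: GS_def length_jcomp)
    qed
  qed
  also have "card (GS sorted D h) = card (GS (sorted_wrt (\<lambda>x y. y \<le> x)) B h)"
  proof -
    have "GS sorted D h = rev ` GS (sorted_wrt (\<lambda>x y. y \<le> x)) B h"
    proof (intro equalityI subsetI)
      fix ks assume ks: "ks \<in> GS sorted D h"
      then have "rev ks \<in> GS (sorted_wrt (\<lambda>x y. y \<le> x)) B h"
        using Sm_rev[of "rev ks" B] by (auto simp: GS_def D_def sorted_wrt_rev)
      then show "ks \<in> rev ` GS (sorted_wrt (\<lambda>x y. y \<le> x)) B h" by (metis image_eqI rev_rev_ident)
    next
      fix ks assume "ks \<in> rev ` GS (sorted_wrt (\<lambda>x y. y \<le> x)) B h"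
      then obtain ix where ix: "ix \<in> GS (sorted_wrt (\<lambda>x y. y \<le> x)) B h" and ks: "ks = rev ix" by auto
      then show "ks \<in> GS sorted D h"
        using Sm_rev[of ix B] by (auto simp: GS_def D_def sorted_wrt_rev)
    qed
    then show ?thesis by (simp add: card_image)
  qed
  finally show ?thesis by (simp add: n_def B_def)
qed


lemma ser_conv_left: "ser (conv_left S (x::'b bcomp \<times> 'b bcomp \<Rightarrow>\<^sub>0 'k::comm_semiring_1)) h = (\<Sum>p\<in>keys x. lookup x p *
    pmult (ser (S (Poly_Mapping.single (fst p) 1))) (ser (Poly_Mapping.single (snd p) (1::'k))) h)"
  unfolding conv_left_def by (simp add: ser_sum ser_qsmult qmult_ser)

lemma ser_conv_right: "ser (conv_right S (x::'b bcomp \<times> 'b bcomp \<Rightarrow>\<^sub>0 'k::comm_semiring_1)) h = (\<Sum>p\<in>keys x. lookup x p *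
    pmult (ser (Poly_Mapping.single (fst p) 1)) (ser (S (Poly_Mapping.single (snd p) (1::'k)))) h)"
  unfolding conv_right_def by (simp add: ser_sum ser_qsmult qmult_ser)

lemma nz_take_drop: "0 \<notin> set (take i (Rep_bcomp (a::'b bcomp)))" "0 \<notin> set (drop i (Rep_bcomp a))"
  using Rep_bcomp_nz[of a] by (auto dest: in_set_takeD in_set_dropD)

lemma left_term:
  assumes i: "i \<le> length (Rep_bcomp (a::'b bcomp))"
  shows "pmult (ser (qantipode (Poly_Mapping.single (bc_take i a) (1::'k::comm_ring_1))))
      (ser (Poly_Mapping.single (bc_drop i a) 1)) h
    = (\<Sum>ks\<in>GS (\<lambda>_. True) (Rep_bcomp a) h.
        if sorted_wrt (\<lambda>x y. y \<le> x) (take i ks) \<and> sorted_wrt (<) (drop i ks) then (-1)^i else 0)"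
proof -
  let ?A = "Rep_bcomp a"
  let ?P = "\<lambda>ks. sorted_wrt (\<lambda>x y. y \<le> x) (take i ks) \<and> sorted_wrt (<) (drop i ks)"
  have 1: "ser (qantipode (Poly_Mapping.single (bc_take i a) (1::'k)))
      = (\<lambda>h. (-1)^i * of_nat (card (GS (sorted_wrt (\<lambda>x y. y \<le> x)) (take i ?A) h)))"
    using i by (simp add: fun_eq_iff ser_antipode Rep_bc_take min_def)
  have 2: "ser (Poly_Mapping.single (bc_drop i a) (1::'k)) = (\<lambda>h. of_nat (card (GS (sorted_wrt (<)) (drop i ?A) h)))"
    by (simp add: fun_eq_iff ser_single Mser_GS Rep_bc_drop)
  have "pmult (ser (qantipode (Poly_Mapping.single (bc_take i a) (1::'k))))
      (ser (Poly_Mapping.single (bc_drop i a) 1)) h = (-1)^i * of_nat (card (GS ?P ?A h))"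
    using i by (simp add: 1 2 pmult_scale_left min_absorb2[OF i] PL[OF nz_take_drop(1)[of i a] nz_take_drop(2)[of i a]])
  also have "GS ?P ?A h = {ks \<in> GS (\<lambda>_. True) ?A h. ?P ks}" by (auto simp: GS_def)
  also have "(-1)^i * of_nat (card {ks \<in> GS (\<lambda>_. True) ?A h. ?P ks}) = (\<Sum>ks\<in>GS (\<lambda>_. True) ?A h. if ?P ks then (-1)^i else (0::'k))"
    by (rule of_nat_card_filter_w[OF fin_GS[OF Rep_bcomp_nz]])
  finally show ?thesis .
qed

lemma right_term:
  assumes i: "i \<le> length (Rep_bcomp (a::'b bcomp))"
  shows "pmult (ser (Poly_Mapping.single (bc_take i a) (1::'k::comm_ring_1)))
      (ser (qantipode (Poly_Mapping.single (bc_drop i a) 1))) h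
    = (\<Sum>ks\<in>GS (\<lambda>_. True) (Rep_bcomp a) h.
        if sorted_wrt (<) (take i ks) \<and> sorted_wrt (\<lambda>x y. y \<le> x) (drop i ks) then (-1)^(length (Rep_bcomp a) - i) else 0)"
proof -
  let ?A = "Rep_bcomp a"
  let ?P = "\<lambda>ks. sorted_wrt (<) (take i ks) \<and> sorted_wrt (\<lambda>x y. y \<le> x) (drop i ks)"
  have 1: "ser (qantipode (Poly_Mapping.single (bc_drop i a) (1::'k)))
      = (\<lambda>h. (-1)^(length ?A - i) * of_nat (card (GS (sorted_wrt (\<lambda>x y. y \<le> x)) (drop i ?A) h)))"
    by (simp add: fun_eq_iff ser_antipode Rep_bc_drop)
  have 2: "ser (Poly_Mapping.single (bc_take i a) (1::'k)) = (\<lambda>h. of_nat (card (GS (sorted_wrt (<)) (take i ?A) h)))"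
    by (simp add: fun_eq_iff ser_single Mser_GS Rep_bc_take)
  have "pmult (ser (Poly_Mapping.single (bc_take i a) (1::'k)))
      (ser (qantipode (Poly_Mapping.single (bc_drop i a) 1))) h = (-1)^(length ?A - i) * of_nat (card (GS ?P ?A h))"
    using i by (simp add: 1 2 pmult_scale_right min_absorb2[OF i] PL[OF nz_take_drop(1)[of i a] nz_take_drop(2)[of i a]])
  also have "GS ?P ?A h = {ks \<in> GS (\<lambda>_. True) ?A h. ?P ks}" by (auto simp: GS_def)
  also have "(-1)^(length ?A - i) * of_nat (card {ks \<in> GS (\<lambda>_. True) ?A h. ?P ks}) = (\<Sum>ks\<in>GS (\<lambda>_. True) ?A h. if ?P ks then (-1)^(length ?A - i) else (0::'k))"
    by (rule of_nat_card_filter_w[OF fin_GS[OF Rep_bcomp_nz]])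
  finally show ?thesis .
qed

lemma GS_true_nil: "GS (\<lambda>_. True) [] h = (if h = 0 then {[]} else {})"
  by (auto simp: GS_def)

lemma Rep_eq_nil: "Rep_bcomp a = [] \<longleftrightarrow> a = Abs_bcomp []"
  by (metis Rep_bcomp_inverse Rep_nil)

lemma per_a:
  fixes a :: "'b bcomp" and g :: "nat \<Rightarrow> 'k::comm_ring_1" and R Q :: "nat \<Rightarrow> nat \<Rightarrow> bool"
  assumes R: "transp R" and Q: "transp Q" and compl: "\<And>x y. Q x y \<longleftrightarrow> \<not> R x y"
    and g: "\<And>j. j < length (Rep_bcomp a) \<Longrightarrow> g j + g (Suc j) = 0" and g0: "length (Rep_bcomp a) = 0 \<Longrightarrow> g 0 = 1"
  shows "(\<Sum>i\<in>{0..length (Rep_bcomp a)}. \<Sum>ks\<in>GS (\<lambda>_. True) (Rep_bcomp a) h.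
        if sorted_wrt R (take i ks) \<and> sorted_wrt Q (drop i ks) then g i else 0)
      = (if a = Abs_bcomp [] then pone h else 0)"
proof -
  let ?n = "length (Rep_bcomp a)"
  let ?E = "GS (\<lambda>_. True) (Rep_bcomp a) h"
  have "(\<Sum>i\<in>{0..?n}. \<Sum>ks\<in>?E. if sorted_wrt R (take i ks) \<and> sorted_wrt Q (drop i ks) then g i else 0)
      = (\<Sum>ks\<in>?E. \<Sum>i\<in>{0..?n}. if sorted_wrt R (take i ks) \<and> sorted_wrt Q (drop i ks) then g i else 0)"
    by (rule sum.swap)
  also have "\<dots> = (\<Sum>ks\<in>?E. if ?n = 0 then 1 else 0)"
  proof (rule sum.cong[OF refl])
    fix ks assume "ks \<in> ?E"
    then have l: "length ks = ?n" by (simp add: GS_def)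
    show "(\<Sum>i\<in>{0..?n}. if sorted_wrt R (take i ks) \<and> sorted_wrt Q (drop i ks) then g i else 0)
        = (if ?n = 0 then 1 else 0)"
    proof (cases "?n = 0")
      case True
      then show ?thesis using l g0 by simp
    next
      case False
      then have "ks \<noteq> []" using l by auto
      then show ?thesis using CL[OF R Q compl, of ks g] g l False by simp
    qed
  qed
  also have "\<dots> = (if a = Abs_bcomp [] then pone h else 0)"
  proof (cases "a = Abs_bcomp []")
    case True
    then have "Rep_bcomp a = []" by (simp add: Rep_nil)
    then show ?thesis using True by (simp add: GS_true_nil pone_def)
  next
    case False
    then show ?thesis by (simp add: Rep_eq_nil)
  qed
  finally show ?thesis .
qed

lemma antipode_left: "conv_left qantipode (qcomul c) = qsmult (qcounit c) (qunit :: 'b bcomp \<Rightarrow>\<^sub>0 'k::comm_ring_1)"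
proof (rule injD[OF ser_inj], rule ext)
  fix h :: "nat \<Rightarrow>\<^sub>0 'b"
  have "ser (conv_left qantipode (qcomul c)) h
    = (\<Sum>a\<in>keys c. lookup c a * (\<Sum>i\<in>{0..length (Rep_bcomp a)}.
         pmult (ser (qantipode (Poly_Mapping.single (bc_take i a) 1))) (ser (Poly_Mapping.single (bc_drop i a) (1::'k))) h))"
    unfolding ser_conv_left
    by (rule LIN_comul[where T = "\<lambda>p. pmult (ser (qantipode (Poly_Mapping.single (fst p) 1)))
         (ser (Poly_Mapping.single (snd p) (1::'k))) h", simplified])
  also have "\<dots> = (\<Sum>a\<in>keys c. if a = Abs_bcomp [] then lookup c a * pone h else 0)"
  proof (rule sum.cong[OF refl])
    fix a :: "'b bcomp"
    have "(\<Sum>i\<in>{0..length (Rep_bcomp a)}.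
         pmult (ser (qantipode (Poly_Mapping.single (bc_take i a) 1))) (ser (Poly_Mapping.single (bc_drop i a) (1::'k))) h)
      = (\<Sum>i\<in>{0..length (Rep_bcomp a)}. \<Sum>ks\<in>GS (\<lambda>_. True) (Rep_bcomp a) h.
        if sorted_wrt (\<lambda>x y. y \<le> x) (take i ks) \<and> sorted_wrt (<) (drop i ks) then (-1)^i else 0)"
      by (rule sum.cong[OF refl]) (simp add: left_term)
    also have "\<dots> = (if a = Abs_bcomp [] then pone h else 0)"
      by (rule per_a) (auto simp: transp_def)
    finally show "lookup c a * (\<Sum>i\<in>{0..length (Rep_bcomp a)}.
         pmult (ser (qantipode (Poly_Mapping.single (bc_take i a) 1))) (ser (Poly_Mapping.single (bc_drop i a) (1::'k))) h)
      = (if a = Abs_bcomp [] then lookup c a * pone h else 0)" by simp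
  qed
  also have "\<dots> = lookup c (Abs_bcomp []) * pone h" by (simp add: in_keys_iff)
  also have "\<dots> = ser (qsmult (qcounit c) qunit) h"
    by (simp add: ser_qsmult ser_qunit qcounit_def)
  finally show "ser (conv_left qantipode (qcomul c)) h = ser (qsmult (qcounit c) qunit) h" .
qed

lemma antipode_right: "conv_right qantipode (qcomul c) = qsmult (qcounit c) (qunit :: 'b bcomp \<Rightarrow>\<^sub>0 'k::comm_ring_1)"
proof (rule injD[OF ser_inj], rule ext)
  fix h :: "nat \<Rightarrow>\<^sub>0 'b"
  have "ser (conv_right qantipode (qcomul c)) h
    = (\<Sum>a\<in>keys c. lookup c a * (\<Sum>i\<in>{0..length (Rep_bcomp a)}.
         pmult (ser (Poly_Mapping.single (bc_take i a) 1)) (ser (qantipode (Poly_Mapping.single (bc_drop i a) (1::'k)))) h))"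
    unfolding ser_conv_right
    by (rule LIN_comul[where T = "\<lambda>p. pmult (ser (Poly_Mapping.single (fst p) 1))
         (ser (qantipode (Poly_Mapping.single (snd p) (1::'k)))) h", simplified])
  also have "\<dots> = (\<Sum>a\<in>keys c. if a = Abs_bcomp [] then lookup c a * pone h else 0)"
  proof (rule sum.cong[OF refl])
    fix a :: "'b bcomp"
    have "(\<Sum>i\<in>{0..length (Rep_bcomp a)}.
         pmult (ser (Poly_Mapping.single (bc_take i a) 1)) (ser (qantipode (Poly_Mapping.single (bc_drop i a) (1::'k)))) h)
      = (\<Sum>i\<in>{0..length (Rep_bcomp a)}. \<Sum>ks\<in>GS (\<lambda>_. True) (Rep_bcomp a) h.
        if sorted_wrt (<) (take i ks) \<and> sorted_wrt (\<lambda>x y. y \<le> x) (drop i ks) then (-1)^(length (Rep_bcomp a) - i) else 0)"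
      by (rule sum.cong[OF refl]) (simp add: right_term)
    also have "\<dots> = (if a = Abs_bcomp [] then pone h else 0)"
    proof (rule per_a)
      fix j assume "j < length (Rep_bcomp a)"
      then have "length (Rep_bcomp a) - j = Suc (length (Rep_bcomp a) - Suc j)" by simp
      then show "(-1::'k) ^ (length (Rep_bcomp a) - j) + (-1) ^ (length (Rep_bcomp a) - Suc j) = 0" by simp
    qed (auto simp: transp_def)
    finally show "lookup c a * (\<Sum>i\<in>{0..length (Rep_bcomp a)}.
         pmult (ser (Poly_Mapping.single (bc_take i a) 1)) (ser (qantipode (Poly_Mapping.single (bc_drop i a) (1::'k)))) h)
      = (if a = Abs_bcomp [] then lookup c a * pone h else 0)" by simp
  qed
  also have "\<dots> = lookup c (Abs_bcomp []) * pone h" by (simp add: in_keys_iff)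
  also have "\<dots> = ser (qsmult (qcounit c) qunit) h"
    by (simp add: ser_qsmult ser_qunit qcounit_def)
  finally show "ser (conv_right qantipode (qcomul c)) h = ser (qsmult (qcounit c) qunit) h" .
qed

end


theorem proposition2p5:
  assumes Q_in_k: "\<forall>n::nat. 0 < n \<longrightarrow> (\<exists>y::'k::comm_ring_1. of_nat n * y = 1)"
    and add_finite: "\<forall>a::'b::comm_monoid_add. finite {(b, c). b + c = a}"
    and nonzero_closed: "\<forall>b c::'b. b \<noteq> 0 \<longrightarrow> c \<noteq> 0 \<longrightarrow> b + c \<noteq> 0"
  shows
    \<comment> \<open>QSym_B is a subalgebra of k[[X]]_B with basis (M_alpha)\<close>
    "inj (ser :: ('b bcomp \<Rightarrow>\<^sub>0 'k) \<Rightarrow> _)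
   \<and> ser (qunit :: ('b bcomp \<Rightarrow>\<^sub>0 'k)) = pone
   \<and> (\<forall>a b :: 'b bcomp \<Rightarrow>\<^sub>0 'k. \<exists>c. ser c = pmult (ser a) (ser b))
    \<comment> \<open>algebra axioms\<close>
   \<and> (\<forall>a b c :: 'b bcomp \<Rightarrow>\<^sub>0 'k. qmult (qmult a b) c = qmult a (qmult b c))
   \<and> (\<forall>a :: 'b bcomp \<Rightarrow>\<^sub>0 'k. qmult qunit a = a \<and> qmult a qunit = a)
   \<and> (\<forall>a b c :: 'b bcomp \<Rightarrow>\<^sub>0 'k. qmult (a + b) c = qmult a c + qmult b c
                                  \<and> qmult c (a + b) = qmult c a + qmult c b)
   \<and> (\<forall>(r::'k) (a :: 'b bcomp \<Rightarrow>\<^sub>0 'k) b. qmult (qsmult r a) b = qsmult r (qmult a b)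
                                  \<and> qmult a (qsmult r b) = qsmult r (qmult a b))
    \<comment> \<open>coalgebra axioms\<close>
   \<and> (\<forall>c :: 'b bcomp \<Rightarrow>\<^sub>0 'k. comul_left (qcomul c) = comul_right (qcomul c))
   \<and> (\<forall>c :: 'b bcomp \<Rightarrow>\<^sub>0 'k. counit_left (qcomul c) = c \<and> counit_right (qcomul c) = c)
    \<comment> \<open>bialgebra compatibility\<close>
   \<and> (\<forall>a b :: 'b bcomp \<Rightarrow>\<^sub>0 'k. qcomul (qmult a b) = tmult (qcomul a) (qcomul b))
   \<and> qcomul (qunit :: 'b bcomp \<Rightarrow>\<^sub>0 'k) = tunit
   \<and> (\<forall>a b :: 'b bcomp \<Rightarrow>\<^sub>0 'k. qcounit (qmult a b) = qcounit a * qcounit b)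
   \<and> qcounit (qunit :: 'b bcomp \<Rightarrow>\<^sub>0 'k) = 1
    \<comment> \<open>the given S_B is an antipode\<close>
   \<and> (\<forall>c :: 'b bcomp \<Rightarrow>\<^sub>0 'k. conv_left qantipode (qcomul c) = qsmult (qcounit c) qunit
                              \<and> conv_right qantipode (qcomul c) = qsmult (qcounit c) qunit)"
proof -
  interpret qsb
  proof
    show "\<And>b c::'b. b \<noteq> 0 \<Longrightarrow> c \<noteq> 0 \<Longrightarrow> b + c \<noteq> 0" using nonzero_closed by blast
    show "\<And>a::'b. finite {(b, c). b + c = a}" using add_finite by blast
  qed
  show ?thesis
  proof (intro conjI allI)
    show "inj (ser :: ('b bcomp \<Rightarrow>\<^sub>0 'k) \<Rightarrow> _)" by (rule ser_inj)
    show "ser (qunit :: ('b bcomp \<Rightarrow>\<^sub>0 'k)) = pone" by (rule ser_qunit)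
    fix a b :: "'b bcomp \<Rightarrow>\<^sub>0 'k"
    show "\<exists>c. ser c = pmult (ser a) (ser b)" by (rule qsym_mult)
  next
    fix a b c :: "'b bcomp \<Rightarrow>\<^sub>0 'k"
    show "qmult (qmult a b) c = qmult a (qmult b c)"
      by (rule injD[OF ser_inj]) (simp add: qmult_ser pmult_assoc)
  next
    fix a :: "'b bcomp \<Rightarrow>\<^sub>0 'k"
    show "qmult qunit a = a"
      by (rule injD[OF ser_inj]) (simp add: qmult_ser ser_qunit fun_eq_iff pmult_pone_left)
    show "qmult a qunit = a"
      by (rule injD[OF ser_inj]) (simp add: qmult_ser ser_qunit fun_eq_iff pmult_pone_right)
  next
    fix a b c :: "'b bcomp \<Rightarrow>\<^sub>0 'k"
    show "qmult (a + b) c = qmult a c + qmult b c"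
      by (rule injD[OF ser_inj]) (simp add: qmult_ser fun_eq_iff ser_add pmult_Dec sum.distrib distrib_right)
    show "qmult c (a + b) = qmult c a + qmult c b"
      by (rule injD[OF ser_inj]) (simp add: qmult_ser fun_eq_iff ser_add pmult_Dec sum.distrib distrib_left)
  next
    fix r :: 'k and a b :: "'b bcomp \<Rightarrow>\<^sub>0 'k"
    show "qmult (qsmult r a) b = qsmult r (qmult a b)"
      by (rule injD[OF ser_inj]) (simp add: qmult_ser fun_eq_iff ser_qsmult pmult_Dec sum_distrib_left mult.assoc)
    show "qmult a (qsmult r b) = qsmult r (qmult a b)"
      by (rule injD[OF ser_inj]) (simp add: qmult_ser fun_eq_iff ser_qsmult pmult_Dec sum_distrib_left ac_simps)
  next
    fix c :: "'b bcomp \<Rightarrow>\<^sub>0 'k"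
    show "comul_left (qcomul c) = comul_right (qcomul c)" by (rule coassoc)
  next
    fix c :: "'b bcomp \<Rightarrow>\<^sub>0 'k"
    show "counit_left (qcomul c) = c" using counit_ax by blast
    show "counit_right (qcomul c) = c" using counit_ax by blast
  next
    fix a b :: "'b bcomp \<Rightarrow>\<^sub>0 'k"
    show "qcomul (qmult a b) = tmult (qcomul a) (qcomul b)" by (rule bialg)
  next
    show "qcomul (qunit :: 'b bcomp \<Rightarrow>\<^sub>0 'k) = tunit" by (rule comul_unit)
  next
    fix a b :: "'b bcomp \<Rightarrow>\<^sub>0 'k"
    show "qcounit (qmult a b) = qcounit a * qcounit b" by (rule counit_mult)
  next
    show "qcounit (qunit :: 'b bcomp \<Rightarrow>\<^sub>0 'k) = 1" by (rule counit_unit)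
  next
    fix c :: "'b bcomp \<Rightarrow>\<^sub>0 'k"
    show "conv_left qantipode (qcomul c) = qsmult (qcounit c) qunit" by (rule antipode_left)
    show "conv_right qantipode (qcomul c) = qsmult (qcounit c) qunit" by (rule antipode_right)
  qed
qed

end
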